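(* Consider the fading cognitive multiple-access channel with $K$ secondary users and $M$ primary receivers described in the context, with positive constants $P^{\rm LT}_1,\ldots,P^{\rm LT}_K>0$ and $\Gamma^{\rm LT}_1,\ldots,\Gamma^{\rm LT}_M>0$. Consider the problem $$\max_{\{p_k(\boldsymbol{\alpha})\}}\ \mathbb{E}\Big[\log\Big(1+\sum_{k=1}^K h_k p_k(\boldsymbol{\alpha})\Big)\Big]$$ over power-control policies $p_k(\boldsymbol{\alpha})\ge 0$, subject to $\mathbb{E}[p_k(\boldsymbol{\alpha})]\le P^{\rm LT}_k$ for all $k$ and $\mathbb{E}\big[\sum_{k=1}^K g_{km}p_k(\boldsymbol{\alpha})\big]\le \Gamma^{\rm LT}_m$ for all $m$. Then dynamic TDMA is optimal: there is an optimal policy for this problem such that for almost every channel realization $\boldsymbol{\alpha}$ at most one index $k$ has $p_k(\boldsymbol{\alpha})>0$. Moreover, letting $\lambda_1^*,\ldots,\lambda_K^*\ge 0$, $\mu_1^*,\ldots,\mu_M^*\ge 0$ be optimal solutions of the Lagrange dual problem, this optimal policy can be taken such that, at almost every $\boldsymbol{\alpha}$, if user $i$ is the user with $p_i(\boldsymbol{\alpha})>0$ then $$\frac{h_i}{\lambda_i^*+\sum_{m=1}^M\mu_m^* g_{im}}\ \ge\ \frac{h_j}{\lambda_j^*+\sum_{m=1}^M\mu_m^* g_{jm}}\quad\forall j\neq i,\qquad p_i(\boldsymbol{\alpha})=\Big(\frac{1}{\lambda_i^*+\sum_{m=1}^M\mu_m^* g_{im}}-\frac{1}{h_i}\Big)^+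 .$$
   Context: Setting: $K$ secondary users transmit to a secondary base station while $M$ primary receivers are present. The channel state is the random vector $\boldsymbol{\alpha}=(h_1,\ldots,h_K,g_{11},\ldots,g_{1M},\ldots,g_{K1},\ldots,g_{KM})$ of nonnegative channel power gains, where $h_k$ is the gain from user $k$ to the base station and $g_{km}$ the gain from user $k$ to primary receiver $m$. $\boldsymbol{\alpha}$ has a continuous, differentiable joint cumulative distribution function, and the $h_k$'s and $g_{km}$'s are independent. A power-control policy assigns to every realization $\boldsymbol{\alpha}$ powers $p_k(\boldsymbol{\alpha})\ge 0$; expectations are over $\boldsymbol{\alpha}$; $\log$ is natural; $(x)^+=\max(0,x)$. The Lagrange dual problem is: minimize over $\lambda_k\ge0,\mu_m\ge0$ the dual function $g(\{\lambda_k\},\{\mu_m\})=\sup_{p_k(\cdot)\ge 0}\Big\{\mathbb{E}[\log(1+\sum_k h_kp_k(\boldsymbol{\alpha}))]-\sum_k\lambda_k(\mathbb{E}[p_k(\boldsymbol{\alpha})]-P_k^{\rm LT})-\sum_m\mu_m(\mathbb{E}[\sum_k g_{km}p_k(\boldsymbol{\alpha})]-\Gamma_m^{\rm LT})\Big\}$. *)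

theory Defs
  imports "HOL-Probability.Probability"
begin

text \<open>Channel state alpha = (h, g): h $ k is the gain user k -> base station,
  g $ (k,m) the gain user k -> primary receiver m. Users are the elements of the
  finite type 'k (K = CARD('k)), primary receivers the elements of 'm (M = CARD('m)).\<close>

type_synonym ('k, 'm) chstate = "(real ^ 'k) \<times> (real ^ ('k \<times> 'm))"

definition hh :: "('k::finite, 'm::finite) chstate \<Rightarrow> 'k \<Rightarrow> real" where
  "hh \<alpha> k = fst \<alpha> $ k"

definition gg :: "('k::finite, 'm::finite) chstate \<Rightarrow> 'k \<Rightarrow> 'm \<Rightarrow> real" where
  "gg \<alpha> k m = snd \<alpha> $ (k, m)"

definition joint_cdf :: "('a::euclidean_space) measure \<Rightarrow> 'a \<Rightarrow> real" where
  "joint_cdf D x = measure D {y. \<forall>i\<in>Basis. y \<bullet> i \<le> x \<bullet> i}"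

definition gain_coord :: "'k + ('k \<times> 'm) \<Rightarrow> ('k::finite, 'm::finite) chstate \<Rightarrow> real" where
  "gain_coord i \<alpha> = (case i of Inl k \<Rightarrow> hh \<alpha> k | Inr (k, m) \<Rightarrow> gg \<alpha> k m)"

definition policy :: "('k::finite, 'm::finite) chstate measure \<Rightarrow> ('k \<Rightarrow> ('k, 'm) chstate \<Rightarrow> real) \<Rightarrow> bool" where
  "policy D p \<longleftrightarrow> (\<forall>k. p k \<in> borel_measurable D \<and> (\<forall>\<alpha>. 0 \<le> p k \<alpha>))"

definition rate :: "('k::finite, 'm::finite) chstate measure \<Rightarrow> ('k \<Rightarrow> ('k, 'm) chstate \<Rightarrow> real) \<Rightarrow> ennreal" where
  "rate D p = (\<integral>\<^sup>+ \<alpha>. ennreal (ln (1 + (\<Sum>k\<in>UNIV. hh \<alpha> k * p k \<alpha>))) \<partial>D)"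

definition feasible :: "('k::finite, 'm::finite) chstate measure \<Rightarrow> ('k \<Rightarrow> real) \<Rightarrow> ('m \<Rightarrow> real)
    \<Rightarrow> ('k \<Rightarrow> ('k, 'm) chstate \<Rightarrow> real) \<Rightarrow> bool" where
  "feasible D PLT GLT p \<longleftrightarrow> policy D p
     \<and> (\<forall>k. (\<integral>\<^sup>+ \<alpha>. ennreal (p k \<alpha>) \<partial>D) \<le> ennreal (PLT k))
     \<and> (\<forall>m. (\<integral>\<^sup>+ \<alpha>. ennreal (\<Sum>k\<in>UNIV. gg \<alpha> k m * p k \<alpha>) \<partial>D) \<le> ennreal (GLT m))"

definition optimal_policy :: "('k::finite, 'm::finite) chstate measure \<Rightarrow> ('k \<Rightarrow> real) \<Rightarrow> ('m \<Rightarrow> real)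
    \<Rightarrow> ('k \<Rightarrow> ('k, 'm) chstate \<Rightarrow> real) \<Rightarrow> bool" where
  "optimal_policy D PLT GLT p \<longleftrightarrow> feasible D PLT GLT p
     \<and> (\<forall>q. feasible D PLT GLT q \<longrightarrow> rate D q \<le> rate D p)"

definition integrable_policy :: "('k::finite, 'm::finite) chstate measure \<Rightarrow> ('k \<Rightarrow> ('k, 'm) chstate \<Rightarrow> real) \<Rightarrow> bool" where
  "integrable_policy D p \<longleftrightarrow> policy D p
     \<and> (\<forall>k. integrable D (p k))
     \<and> (\<forall>m. integrable D (\<lambda>\<alpha>. \<Sum>k\<in>UNIV. gg \<alpha> k m * p k \<alpha>))
     \<and> integrable D (\<lambda>\<alpha>. ln (1 + (\<Sum>k\<in>UNIV. hh \<alpha> k * p k \<alpha>)))"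

definition dual_fun :: "('k::finite, 'm::finite) chstate measure \<Rightarrow> ('k \<Rightarrow> real) \<Rightarrow> ('m \<Rightarrow> real)
    \<Rightarrow> ('k \<Rightarrow> real) \<Rightarrow> ('m \<Rightarrow> real) \<Rightarrow> ereal" where
  "dual_fun D PLT GLT lam mu =
     (SUP p \<in> {p. integrable_policy D p}.
        ereal ((\<integral>\<alpha>. ln (1 + (\<Sum>k\<in>UNIV. hh \<alpha> k * p k \<alpha>)) \<partial>D)
          - (\<Sum>k\<in>UNIV. lam k * ((\<integral>\<alpha>. p k \<alpha> \<partial>D) - PLT k))
          - (\<Sum>m\<in>UNIV. mu m * ((\<integral>\<alpha>. (\<Sum>k\<in>UNIV. gg \<alpha> k m * p k \<alpha>) \<partial>D) - GLT m))))"

definition dual_optimal :: "('k::finite, 'm::finite) chstate measure \<Rightarrow> ('k \<Rightarrow> real) \<Rightarrow> ('m \<Rightarrow> real)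
    \<Rightarrow> ('k \<Rightarrow> real) \<Rightarrow> ('m \<Rightarrow> real) \<Rightarrow> bool" where
  "dual_optimal D PLT GLT lam mu \<longleftrightarrow>
     (\<forall>k. 0 \<le> lam k) \<and> (\<forall>m. 0 \<le> mu m) \<and> dual_fun D PLT GLT lam mu < \<infinity>
     \<and> (\<forall>lam' mu'. (\<forall>k. 0 \<le> lam' k) \<and> (\<forall>m. 0 \<le> mu' m) \<longrightarrow>
          dual_fun D PLT GLT lam mu \<le> dual_fun D PLT GLT lam' mu')"

end

theory Submission
  imports Defs
begin

definition cc :: "('k::finite \<Rightarrow> real) \<Rightarrow> ('m::finite \<Rightarrow> real) \<Rightarrow> ('k, 'm) chstate \<Rightarrow> 'k \<Rightarrow> real" where
  "cc l u \<alpha> i = l i + (\<Sum>m\<in>UNIV. u m * gg \<alpha> i m)"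

definition pol :: "('k::finite \<Rightarrow> real) \<Rightarrow> ('m::finite \<Rightarrow> real) \<Rightarrow> 'k \<Rightarrow> ('k, 'm) chstate \<Rightarrow> real" where
  "pol l u i \<alpha> = (if (\<forall>j. j \<noteq> i \<longrightarrow> hh \<alpha> j / cc l u \<alpha> j < hh \<alpha> i / cc l u \<alpha> i)
      then max 0 (1 / cc l u \<alpha> i - 1 / hh \<alpha> i) else 0)"

definition LL :: "('k::finite \<Rightarrow> real) \<Rightarrow> ('m::finite \<Rightarrow> real) \<Rightarrow> ('k \<Rightarrow> real) \<Rightarrow> ('k, 'm) chstate \<Rightarrow> real" where
  "LL l u x \<alpha> = ln (1 + (\<Sum>k\<in>UNIV. hh \<alpha> k * x k)) - (\<Sum>k\<in>UNIV. l k * x k)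
      - (\<Sum>m\<in>UNIV. u m * (\<Sum>k\<in>UNIV. gg \<alpha> k m * x k))"

definition VV :: "('k::finite \<Rightarrow> real) \<Rightarrow> ('m::finite \<Rightarrow> real) \<Rightarrow> ('k, 'm) chstate \<Rightarrow> real" where
  "VV l u \<alpha> = LL l u (\<lambda>k. pol l u k \<alpha>) \<alpha>"

definition good :: "('k::finite \<Rightarrow> real) \<Rightarrow> ('m::finite \<Rightarrow> real) \<Rightarrow> ('k, 'm) chstate \<Rightarrow> bool" where
  "good l u \<alpha> \<longleftrightarrow> (\<forall>k. 0 < hh \<alpha> k) \<and> (\<forall>k m. 0 \<le> gg \<alpha> k m) \<and> (\<forall>k. 0 < cc l u \<alpha> k)
     \<and> (\<forall>i j. i \<noteq> j \<longrightarrow> hh \<alpha> i / cc l u \<alpha> i \<noteq> hh \<alpha> j / cc l u \<alpha> j)"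

lemma LL_cc: "LL l u x \<alpha> = ln (1 + (\<Sum>k\<in>UNIV. hh \<alpha> k * x k)) - (\<Sum>k\<in>UNIV. cc l u \<alpha> k * x k)"
proof -
  have "(\<Sum>m\<in>UNIV. u m * (\<Sum>k\<in>UNIV. gg \<alpha> k m * x k)) = (\<Sum>m\<in>UNIV. \<Sum>k\<in>UNIV. u m * gg \<alpha> k m * x k)"
    by (simp add: sum_distrib_left mult.assoc)
  also have "\<dots> = (\<Sum>k\<in>UNIV. \<Sum>m\<in>UNIV. u m * gg \<alpha> k m * x k)"
    by (rule sum.swap)
  also have "\<dots> = (\<Sum>k\<in>UNIV. (\<Sum>m\<in>UNIV. u m * gg \<alpha> k m) * x k)"
    by (simp add: sum_distrib_right)
  finally have "(\<Sum>m\<in>UNIV. u m * (\<Sum>k\<in>UNIV. gg \<alpha> k m * x k)) = (\<Sum>k\<in>UNIV. (\<Sum>m\<in>UNIV. u m * gg \<alpha> k m) * x k)" .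
  moreover have "(\<Sum>k\<in>UNIV. cc l u \<alpha> k * x k) = (\<Sum>k\<in>UNIV. l k * x k) + (\<Sum>k\<in>UNIV. (\<Sum>m\<in>UNIV. u m * gg \<alpha> k m) * x k)"
    by (simp add: cc_def distrib_right sum.distrib)
  ultimately show ?thesis
    by (simp add: LL_def)
qed

lemma good_argmax:
  assumes "good l u \<alpha>"
  obtains i where "\<And>j. j \<noteq> i \<Longrightarrow> hh \<alpha> j / cc l u \<alpha> j < hh \<alpha> i / cc l u \<alpha> i"
proof -
  let ?r = "\<lambda>k. hh \<alpha> k / cc l u \<alpha> k"
  have "Max (range ?r) \<in> range ?r" by (rule Max_in) auto
  then obtain i where i: "?r i = Max (range ?r)" by (auto simp del: Max_in)
  have "\<And>j. j \<noteq> i \<Longrightarrow> ?r j < ?r i"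
  proof -
    fix j assume "j \<noteq> i"
    have "?r j \<le> ?r i" unfolding i by (rule Max_ge) auto
    moreover have "?r j \<noteq> ?r i" using assms \<open>j \<noteq> i\<close> unfolding good_def by blast
    ultimately show "?r j < ?r i" by simp
  qed
  then show ?thesis using that by blast
qed

lemma pol_argmax:
  assumes "\<And>j. j \<noteq> i \<Longrightarrow> hh \<alpha> j / cc l u \<alpha> j < hh \<alpha> i / cc l u \<alpha> i"
  shows "pol l u i \<alpha> = max 0 (1 / cc l u \<alpha> i - 1 / hh \<alpha> i)" "\<And>j. j \<noteq> i \<Longrightarrow> pol l u j \<alpha> = 0"
proof -
  have "\<forall>j. j \<noteq> i \<longrightarrow> hh \<alpha> j / cc l u \<alpha> j < hh \<alpha> i / cc l u \<alpha> i" using assms by blast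
  then show "pol l u i \<alpha> = max 0 (1 / cc l u \<alpha> i - 1 / hh \<alpha> i)" unfolding pol_def by (rule if_P)
  fix j assume "j \<noteq> i"
  then have "\<not> (hh \<alpha> i / cc l u \<alpha> i < hh \<alpha> j / cc l u \<alpha> j)" using assms[of j] by (meson less_asym)
  then have "\<not> (\<forall>k. k \<noteq> j \<longrightarrow> hh \<alpha> k / cc l u \<alpha> k < hh \<alpha> j / cc l u \<alpha> j)" using \<open>j \<noteq> i\<close> by (metis (no_types))
  then show "pol l u j \<alpha> = 0" unfolding pol_def by (rule if_not_P)
qed

lemma pol_nonneg: "0 \<le> pol l u i \<alpha>"
  by (simp add: pol_def)

lemma P1:
  assumes g: "good l u \<alpha>" and x: "\<And>k. 0 \<le> x k"
  shows "LL l u x \<alpha> \<le> VV l u \<alpha>"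
proof -
  obtain i where i: "\<And>j. j \<noteq> i \<Longrightarrow> hh \<alpha> j / cc l u \<alpha> j < hh \<alpha> i / cc l u \<alpha> i"
    using good_argmax[OF g] by blast
  note pi = pol_argmax[OF i]
  have hpos: "\<And>k. 0 < hh \<alpha> k" and cpos: "\<And>k. 0 < cc l u \<alpha> k" using g by (auto simp: good_def)
  define r where "r = hh \<alpha> i / cc l u \<alpha> i"
  have rpos: "0 < r" using hpos cpos by (simp add: r_def)
  have rle: "\<And>k. hh \<alpha> k / cc l u \<alpha> k \<le> r" using i r_def by (metis order.refl order.strict_implies_order)
  have cge: "\<And>k. hh \<alpha> k / r \<le> cc l u \<alpha> k"
  proof -
    fix k have "hh \<alpha> k / cc l u \<alpha> k \<le> r" by (rule rle)
    then have "hh \<alpha> k \<le> r * cc l u \<alpha> k" using pos_divide_le_eq[OF cpos[of k]] by simp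
    then show "hh \<alpha> k / r \<le> cc l u \<alpha> k" using pos_divide_le_eq[OF rpos] by (simp add: mult.commute[of r])
  qed
  define s where "s = (\<Sum>k\<in>UNIV. hh \<alpha> k * x k)"
  have s0: "0 \<le> s" unfolding s_def using hpos x by (intro sum_nonneg) (simp add: less_imp_le)
  have "(\<Sum>k\<in>UNIV. cc l u \<alpha> k * x k) \<ge> (\<Sum>k\<in>UNIV. (hh \<alpha> k / r) * x k)"
    using cge x by (intro sum_mono mult_right_mono) auto
  also have "(\<Sum>k\<in>UNIV. (hh \<alpha> k / r) * x k) = s / r" by (simp add: s_def sum_divide_distrib)
  finally have L1: "LL l u x \<alpha> \<le> ln (1 + s) - s / r" by (simp add: LL_cc s_def)
  have sumpol: "\<And>f. (\<Sum>k\<in>UNIV. f k * pol l u k \<alpha>) = f i * pol l u i \<alpha>"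
    using pi(2) by (subst sum.remove[of _ i]) auto
  have V: "VV l u \<alpha> = ln (1 + hh \<alpha> i * pol l u i \<alpha>) - cc l u \<alpha> i * pol l u i \<alpha>"
    by (simp add: VV_def LL_cc sumpol)
  show ?thesis
  proof (cases "r \<le> 1")
    case True
    then have "hh \<alpha> i \<le> cc l u \<alpha> i" using cpos[of i] by (simp add: r_def divide_le_eq)
    then have "1 / cc l u \<alpha> i - 1 / hh \<alpha> i \<le> 0" using hpos[of i] cpos[of i] by (simp add: frac_le)
    then have "pol l u i \<alpha> = 0" using pi(1) by simp
    then have "VV l u \<alpha> = 0" using V by simp
    have "ln (1 + s) \<le> s" using ln_le_minus_one[of "1+s"] s0 by simp
    also have "s \<le> s / r" using True rpos s0 by (simp add: le_divide_eq mult_left_le)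
    finally show ?thesis using L1 \<open>VV l u \<alpha> = 0\<close> by simp
  next
    case False
    then have "cc l u \<alpha> i < hh \<alpha> i" using cpos[of i] by (simp add: r_def divide_le_eq not_le)
    then have "0 \<le> 1 / cc l u \<alpha> i - 1 / hh \<alpha> i" using hpos[of i] cpos[of i] by (simp add: frac_le)
    then have P: "pol l u i \<alpha> = 1 / cc l u \<alpha> i - 1 / hh \<alpha> i" using pi(1) by simp
    have a: "hh \<alpha> i * pol l u i \<alpha> = r - 1" using hpos[of i] cpos[of i] by (simp add: P r_def field_simps)
    have b: "cc l u \<alpha> i * pol l u i \<alpha> = 1 - 1 / r" using hpos[of i] cpos[of i] by (simp add: P r_def field_simps)
    have Vr: "VV l u \<alpha> = ln r - 1 + 1 / r" using V a b by simp
    have "ln ((1 + s) / r) \<le> (1 + s) / r - 1" using ln_le_minus_one[of "(1+s)/r"] s0 rpos by simp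
    moreover have "ln ((1 + s) / r) = ln (1 + s) - ln r" using s0 rpos by (simp add: ln_div)
    ultimately have "ln (1 + s) - s / r \<le> ln r - 1 + 1 / r" by (simp add: add_divide_distrib)
    then show ?thesis using L1 Vr by simp
  qed
qed

lemma cc_tendsto:
  assumes "\<And>k. (\<lambda>n. L n k) \<longlonglongrightarrow> l k" "\<And>m. (\<lambda>n. U n m) \<longlonglongrightarrow> u m"
  shows "(\<lambda>n. cc (L n) (U n) \<alpha> k) \<longlonglongrightarrow> cc l u \<alpha> k"
  unfolding cc_def using assms by (intro tendsto_intros) auto

lemma eventually_less_seq:
  fixes a b :: "nat \<Rightarrow> real"
  assumes "a \<longlonglongrightarrow> x" "b \<longlonglongrightarrow> y" "x < y"
  shows "eventually (\<lambda>n. a n < b n) sequentially"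
proof -
  have "(\<lambda>n. b n - a n) \<longlonglongrightarrow> y - x" using assms by (intro tendsto_intros)
  from order_tendstoD(1)[OF this, of 0] assms(3) show ?thesis by simp
qed

lemma PC:
  assumes g: "good l u \<alpha>" and L: "\<And>k. (\<lambda>n. L n k) \<longlonglongrightarrow> l k" and U: "\<And>m. (\<lambda>n. U n m) \<longlonglongrightarrow> u m"
  shows "(\<lambda>n. pol (L n) (U n) i \<alpha>) \<longlonglongrightarrow> pol l u i \<alpha>"
proof -
  have cpos: "\<And>k. cc l u \<alpha> k \<noteq> 0" using g unfolding good_def by (metis less_irrefl)
  have C: "\<And>k. (\<lambda>n. cc (L n) (U n) \<alpha> k) \<longlonglongrightarrow> cc l u \<alpha> k" by (rule cc_tendsto[OF L U])
  have R: "\<And>k. (\<lambda>n. hh \<alpha> k / cc (L n) (U n) \<alpha> k) \<longlonglongrightarrow> hh \<alpha> k / cc l u \<alpha> k"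
    using C cpos by (intro tendsto_intros) auto
  have M: "(\<lambda>n. max 0 (1 / cc (L n) (U n) \<alpha> i - 1 / hh \<alpha> i)) \<longlonglongrightarrow> max 0 (1 / cc l u \<alpha> i - 1 / hh \<alpha> i)"
    using C cpos by (intro tendsto_intros) auto
  show ?thesis
  proof (cases "\<forall>j. j \<noteq> i \<longrightarrow> hh \<alpha> j / cc l u \<alpha> j < hh \<alpha> i / cc l u \<alpha> i")
    case True
    have "eventually (\<lambda>n. \<forall>j. j \<noteq> i \<longrightarrow> hh \<alpha> j / cc (L n) (U n) \<alpha> j < hh \<alpha> i / cc (L n) (U n) \<alpha> i) sequentially"
    proof (rule eventually_all_finite)
      fix j show "eventually (\<lambda>n. j \<noteq> i \<longrightarrow> hh \<alpha> j / cc (L n) (U n) \<alpha> j < hh \<alpha> i / cc (L n) (U n) \<alpha> i) sequentially"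
      proof (cases "j = i")
        case False
        then show ?thesis using eventually_less_seq[OF R[of j] R[of i]] True by (auto elim: eventually_mono)
      qed simp
    qed
    then have "eventually (\<lambda>n. pol (L n) (U n) i \<alpha> = max 0 (1 / cc (L n) (U n) \<alpha> i - 1 / hh \<alpha> i)) sequentially"
      by (auto simp: pol_def elim: eventually_mono)
    moreover have "pol l u i \<alpha> = max 0 (1 / cc l u \<alpha> i - 1 / hh \<alpha> i)" using True by (simp add: pol_def)
    ultimately show ?thesis using M by (simp add: tendsto_cong)
  next
    case False
    then obtain j where j: "j \<noteq> i" "\<not> hh \<alpha> j / cc l u \<alpha> j < hh \<alpha> i / cc l u \<alpha> i" by blast
    then have "hh \<alpha> i / cc l u \<alpha> i < hh \<alpha> j / cc l u \<alpha> j"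
      using g unfolding good_def by (metis linorder_neqE_linordered_idom)
    from eventually_less_seq[OF R[of i] R[of j] this]
    have "eventually (\<lambda>n. pol (L n) (U n) i \<alpha> = 0) sequentially"
      using j(1) by (auto simp: pol_def elim!: eventually_mono dest!: spec[of _ j])
    moreover have "pol l u i \<alpha> = 0" unfolding pol_def using False by (rule if_not_P)
    ultimately show ?thesis by (simp add: tendsto_cong)
  qed
qed

lemma cdf_set_closed: "closed {y::'a::euclidean_space. \<forall>i\<in>Basis. y \<bullet> i \<le> x \<bullet> i}"
proof -
  have "{y::'a. \<forall>i\<in>Basis. y \<bullet> i \<le> x \<bullet> i} = (\<Inter>i\<in>Basis. {y. inner i y \<le> x \<bullet> i})"
    by (auto simp: inner_commute)
  then show ?thesis by (simp add: closed_INT closed_halfspace_le)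
qed

lemma no_atom:
  fixes D :: "'a::euclidean_space measure" and a :: real
  assumes prob: "prob_space D" and sD: "sets D = sets borel"
    and cont: "continuous_on UNIV (joint_cdf D)" and b: "b \<in> Basis"
  shows "{y \<in> space D. y \<bullet> b = a} \<in> null_sets D"
proof -
  interpret prob_space D by (rule prob)
  have spD: "space D = UNIV" using sets_eq_imp_space_eq[OF sD] by simp
  define F where "F = joint_cdf D"
  define S where "S n = {y \<in> space D. y \<bullet> b = a \<and> (\<forall>b'\<in>Basis. b' \<noteq> b \<longrightarrow> y \<bullet> b' \<le> real n)}" for n :: nat
  have Sn: "S n \<in> null_sets D" for n
  proof -
    define x :: 'a where "x = a *\<^sub>R b + real n *\<^sub>R (\<Sum>b'\<in>Basis - {b}. b')"
    have xb: "x \<bullet> b = a" using b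
      by (simp add: x_def inner_add_left inner_sum_left inner_not_same_Basis)
    have xb': "x \<bullet> b' = real n" if "b' \<in> Basis" "b' \<noteq> b" for b'
    proof -
      have "(\<Sum>c\<in>Basis - {b}. c \<bullet> b') = (\<Sum>c\<in>Basis - {b}. if c = b' then 1 else 0)"
        using that by (intro sum.cong) (auto simp: inner_not_same_Basis)
      also have "\<dots> = 1" using that by simp
      finally have s1: "(\<Sum>c\<in>Basis - {b}. c \<bullet> b') = 1" .
      have "x \<bullet> b' = a * (b \<bullet> b') + real n * (\<Sum>c\<in>Basis - {b}. c \<bullet> b')"
        by (simp add: x_def inner_add_left inner_sum_left)
      moreover have "b \<bullet> b' = 0" using that b by (intro inner_not_same_Basis) auto
      ultimately show ?thesis using s1 by simp
    qed
    define A where "A t = {y. \<forall>i\<in>Basis. y \<bullet> i \<le> (x - t *\<^sub>R b) \<bullet> i}" for t :: real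
    have Ameas: "A t \<in> sets D" for t
      unfolding sD A_def by (rule borel_closed[OF cdf_set_closed])
    have FA: "F (x - t *\<^sub>R b) = measure D (A t)" for t by (simp add: F_def joint_cdf_def A_def)
    have Smeas: "S n \<in> sets D"
    proof -
      have "S n = {y. y \<bullet> b = a} \<inter> (\<Inter>b'\<in>Basis - {b}. {y. y \<bullet> b' \<le> real n})"
        by (auto simp: S_def spD)
      moreover have "closed {y::'a. y \<bullet> b = a}"
        by (simp add: closed_Collect_eq continuous_on_inner continuous_on_id continuous_on_const)
      moreover have "closed {y::'a. y \<bullet> b' \<le> real n}" for b'
        by (simp add: closed_Collect_le continuous_on_inner continuous_on_id continuous_on_const)
      ultimately have "closed (S n)" by (simp add: closed_Int closed_INT)
      then show ?thesis unfolding sD by (rule borel_closed)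
    qed
    have le: "measure D (S n) \<le> F x - F (x - t *\<^sub>R b)" if t: "t > 0" for t
    proof -
      have sub: "A t \<subseteq> A 0"
      proof
        fix y assume y: "y \<in> A t"
        show "y \<in> A 0"
        proof (unfold A_def mem_Collect_eq, intro ballI)
          fix i :: 'a assume i: "i \<in> Basis"
          have "0 \<le> b \<bullet> i" using b i by (cases "b = i") (auto simp: inner_not_same_Basis)
          then have "(x - t *\<^sub>R b) \<bullet> i \<le> x \<bullet> i" using t by (simp add: inner_diff_left)
          moreover have "y \<bullet> i \<le> (x - t *\<^sub>R b) \<bullet> i" using y i unfolding A_def by blast
          ultimately show "y \<bullet> i \<le> (x - 0 *\<^sub>R b) \<bullet> i" by simp
        qed
      qed
      have "S n \<subseteq> A 0 - A t"
      proof
        fix y assume y: "y \<in> S n"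
        have "y \<in> A 0"
        proof (unfold A_def mem_Collect_eq, intro ballI)
          fix i :: 'a assume i: "i \<in> Basis"
          show "y \<bullet> i \<le> (x - 0 *\<^sub>R b) \<bullet> i"
            using y xb xb'[OF i] i by (cases "i = b") (auto simp: S_def)
        qed
        moreover have "y \<notin> A t" using y b t xb by (auto simp: S_def A_def inner_diff_left intro!: bexI[of _ b])
        ultimately show "y \<in> A 0 - A t" by simp
      qed
      then have "measure D (S n) \<le> measure D (A 0 - A t)"
        using Ameas by (intro finite_measure_mono) auto
      also have "\<dots> = measure D (A 0) - measure D (A t)"
        using Ameas sub by (intro finite_measure_Diff) auto
      finally show ?thesis by (simp add: FA[symmetric])
    qed
    have "isCont F x" using cont unfolding F_def continuous_on_eq_continuous_at[OF open_UNIV] by blast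
    moreover have "(\<lambda>k. x - (1 / real (Suc k)) *\<^sub>R b) \<longlonglongrightarrow> x"
    proof -
      have "(\<lambda>k. 1 / real (Suc k)) \<longlonglongrightarrow> 0"
        using LIMSEQ_inverse_real_of_nat unfolding inverse_eq_divide .
      from tendsto_diff[OF tendsto_const tendsto_scaleR[OF this tendsto_const]]
      have "(\<lambda>k. x - (1 / real (Suc k)) *\<^sub>R b) \<longlonglongrightarrow> x - 0 *\<^sub>R b" .
      then show ?thesis by (simp only: scale_zero_left diff_zero)
    qed
    ultimately have "(\<lambda>k. F (x - (1 / real (Suc k)) *\<^sub>R b)) \<longlonglongrightarrow> F x"
      by (rule isCont_tendsto_compose)
    from tendsto_diff[OF tendsto_const this]
    have "(\<lambda>k. F x - F (x - (1 / real (Suc k)) *\<^sub>R b)) \<longlonglongrightarrow> F x - F x" .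
    then have "measure D (S n) \<le> F x - F x"
    proof (rule LIMSEQ_le_const)
      show "\<exists>N. \<forall>k\<ge>N. measure D (S n) \<le> F x - F (x - (1 / real (Suc k)) *\<^sub>R b)"
        using le by (intro exI[of _ 0] allI impI) simp
    qed
    then have "measure D (S n) \<le> 0" by simp
    then have "measure D (S n) = 0" using measure_nonneg[of D "S n"] by linarith
    then show ?thesis using Smeas by (simp add: emeasure_eq_measure null_sets_def)
  qed
  have U: "(\<Union>n. S n) \<in> null_sets D" using Sn by (rule null_sets_UN)
  have sub: "{y \<in> space D. y \<bullet> b = a} \<subseteq> (\<Union>n. S n)"
  proof
    fix y assume y: "y \<in> {y \<in> space D. y \<bullet> b = a}"
    obtain n :: nat where n: "(\<Sum>b'\<in>Basis. \<bar>y \<bullet> b'\<bar>) \<le> real n" using real_arch_simple by blast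
    have "\<forall>b'\<in>Basis. b' \<noteq> b \<longrightarrow> y \<bullet> b' \<le> real n"
    proof (intro ballI impI)
      fix b' assume "b' \<in> Basis" "b' \<noteq> b"
      then have "\<bar>y \<bullet> b'\<bar> \<le> (\<Sum>b'\<in>Basis. \<bar>y \<bullet> b'\<bar>)"
        by (intro member_le_sum) auto
      then show "y \<bullet> b' \<le> real n" using n by linarith
    qed
    then show "y \<in> (\<Union>n. S n)" using y by (auto simp: S_def)
  qed
  have "closed {y::'a. y \<bullet> b = a}"
    by (simp add: closed_Collect_eq continuous_on_inner continuous_on_id continuous_on_const)
  then have M: "{y \<in> space D. y \<bullet> b = a} \<in> sets D" unfolding spD sD by (simp add: borel_closed)
  show ?thesis by (rule null_sets_subset[OF U M sub])
qed

lemma tie_null: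
  fixes D :: "('k::finite, 'm::finite) chstate measure" and i :: "'k + ('k \<times> 'm)"
    and F :: "('k + ('k \<times> 'm) \<Rightarrow> real) \<Rightarrow> real"
  assumes prob: "prob_space D"
    and indep: "prob_space.indep_vars D (\<lambda>_. borel) gain_coord UNIV"
    and NA: "\<And>a. {\<alpha> \<in> space D. gain_coord i \<alpha> = a} \<in> null_sets D"
    and Fm[measurable]: "F \<in> borel_measurable (PiM (UNIV - {i}) (\<lambda>_. borel))"
  shows "{\<alpha> \<in> space D. gain_coord i \<alpha> = F (restrict (\<lambda>j. gain_coord j \<alpha>) (UNIV - {i}))} \<in> null_sets D"
proof -
  interpret prob_space D by (rule prob)
  define L where "L = (UNIV :: ('k + ('k \<times> 'm)) set) - {i}"
  define Y where "Y = (\<lambda>\<alpha>. restrict (\<lambda>j. gain_coord j \<alpha>) L)"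
  define X where "X = gain_coord i"
  define PL where "PL = (PiM L (\<lambda>_. borel) :: ('k + ('k \<times> 'm) \<Rightarrow> real) measure)"
  define PI where "PI = (PiM {i} (\<lambda>_. borel) :: ('k + ('k \<times> 'm) \<Rightarrow> real) measure)"
  define Z where "Z = (\<lambda>\<alpha>. restrict (\<lambda>j. gain_coord j \<alpha>) {i})"
  have iv: "indep_var PL Y PI Z"
    unfolding PL_def Y_def L_def PI_def Z_def by (rule indep_var_restrict[OF indep]) auto
  then have rv: "random_variable PL Y" "random_variable PI Z"
    and deq: "distr D PL Y \<Otimes>\<^sub>M distr D PI Z = distr D (PL \<Otimes>\<^sub>M PI) (\<lambda>x. (Y x, Z x))"
    unfolding indep_var_distribution_eq by auto
  have Fm': "F \<in> borel_measurable PL" using Fm by (simp add: PL_def L_def)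
  have comp: "(\<lambda>f. f i) \<in> borel_measurable PI" unfolding PI_def by (rule measurable_component_singleton) simp
  define S where "S = {p \<in> space (PL \<Otimes>\<^sub>M PI). snd p i = F (fst p)}"
  have S: "S \<in> sets (PL \<Otimes>\<^sub>M PI)" unfolding S_def using Fm' comp by measurable
  interpret N2: prob_space "distr D PI Z" by (rule prob_space_distr[OF rv(2)])
  have "emeasure D ((\<lambda>x. (Y x, Z x)) -` S \<inter> space D) = emeasure (distr D (PL \<Otimes>\<^sub>M PI) (\<lambda>x. (Y x, Z x))) S"
    using S rv by (intro emeasure_distr[symmetric]) auto
  also have "\<dots> = emeasure (distr D PL Y \<Otimes>\<^sub>M distr D PI Z) S" by (simp add: deq)
  also have "\<dots> = (\<integral>\<^sup>+y. emeasure (distr D PI Z) (Pair y -` S) \<partial>distr D PL Y)"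
    using S by (intro N2.emeasure_pair_measure_alt) simp
  also have "\<dots> = (\<integral>\<^sup>+y. 0 \<partial>distr D PL Y)"
  proof (rule nn_integral_cong)
    fix y assume y: "y \<in> space (distr D PL Y)"
    then have "Pair y -` S = {z \<in> space PI. z i = F y}" by (auto simp: S_def space_pair_measure)
    moreover have "{z \<in> space PI. z i = F y} \<in> sets PI" using comp by measurable
    ultimately have "emeasure (distr D PI Z) (Pair y -` S) = emeasure D (Z -` {z \<in> space PI. z i = F y} \<inter> space D)"
      using rv by (simp add: emeasure_distr)
    also have "Z -` {z \<in> space PI. z i = F y} \<inter> space D = {\<alpha> \<in> space D. gain_coord i \<alpha> = F y}"
      using measurable_space[OF rv(2)] by (auto simp: Z_def)
    also have "emeasure D \<dots> = 0" using NA by auto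
    finally show "emeasure (distr D PI Z) (Pair y -` S) = 0" .
  qed
  finally have E0: "emeasure D ((\<lambda>x. (Y x, Z x)) -` S \<inter> space D) = 0" by simp
  have "(\<lambda>x. (Y x, Z x)) -` S \<inter> space D = {\<alpha> \<in> space D. gain_coord i \<alpha> = F (restrict (\<lambda>j. gain_coord j \<alpha>) (UNIV - {i}))}"
    using measurable_space[OF rv(1)] measurable_space[OF rv(2)] by (auto simp: S_def Y_def Z_def L_def space_pair_measure)
  moreover have "(\<lambda>x. (Y x, Z x)) -` S \<inter> space D \<in> sets D"
    using S rv by measurable
  ultimately show ?thesis using E0 by (simp add: null_sets_def)
qed

definition bv :: "'k + ('k \<times> 'm) \<Rightarrow> ('k::finite, 'm::finite) chstate" where
  "bv i = (case i of Inl k \<Rightarrow> (axis k 1, 0) | Inr km \<Rightarrow> (0, axis km 1))"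

lemma bv_Basis: "bv i \<in> Basis"
  by (cases i) (auto simp: bv_def Basis_prod_def Basis_vec_def)

lemma gc_bv: "gain_coord i \<alpha> = \<alpha> \<bullet> bv i"
  by (cases i; cases \<alpha>) (auto simp: bv_def gain_coord_def hh_def gg_def inner_axis)

locale setting =
  fixes D :: "('k::finite, 'm::finite) chstate measure"
    and PLT :: "'k \<Rightarrow> real" and GLT :: "'m \<Rightarrow> real"
    and lam :: "'k \<Rightarrow> real" and mu :: "'m \<Rightarrow> real"
  assumes prob: "prob_space D"
    and sets_D: "sets D = sets borel"
    and nonneg: "AE \<alpha> in D. (\<forall>k. 0 \<le> hh \<alpha> k) \<and> (\<forall>k m. 0 \<le> gg \<alpha> k m)"
    and cdf_cont: "continuous_on UNIV (joint_cdf D)"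
    and indep: "prob_space.indep_vars D (\<lambda>_. borel) gain_coord UNIV"
    and PLT_pos: "\<forall>k. 0 < PLT k"
    and GLT_pos: "\<forall>m. 0 < GLT m"
    and dual_opt: "dual_optimal D PLT GLT lam mu"
begin

sublocale prob_space D by (rule prob)

lemma space_D: "space D = UNIV" using sets_eq_imp_space_eq[OF sets_D] by simp

lemma gc_meas[measurable]: "gain_coord i \<in> borel_measurable D"
  using indep unfolding indep_vars_def by auto

lemma hh_meas[measurable]: "(\<lambda>\<alpha>. hh \<alpha> k) \<in> borel_measurable D"
proof -
  have eq: "(\<lambda>\<alpha>. hh \<alpha> k) = gain_coord (Inl k)" by (auto simp: gain_coord_def)
  show ?thesis unfolding eq by (rule gc_meas)
qed

lemma gg_meas[measurable]: "(\<lambda>\<alpha>. gg \<alpha> k m) \<in> borel_measurable D"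
proof -
  have eq: "(\<lambda>\<alpha>. gg \<alpha> k m) = gain_coord (Inr (k, m))" by (auto simp: gain_coord_def)
  show ?thesis unfolding eq by (rule gc_meas)
qed

lemma NA: "{\<alpha> \<in> space D. gain_coord i \<alpha> = a} \<in> null_sets D"
  using no_atom[OF prob sets_D cdf_cont bv_Basis[of i], of a] by (simp add: gc_bv)

lemma AE_h_pos: "AE \<alpha> in D. \<forall>k. 0 < hh \<alpha> k"
proof -
  have "AE \<alpha> in D. hh \<alpha> k \<noteq> 0" for k
    by (rule AE_I'[OF NA[of "Inl k" 0]]) (auto simp: gain_coord_def)
  then have "AE \<alpha> in D. \<forall>k. hh \<alpha> k \<noteq> 0" by (rule eventually_all_finite)
  then show ?thesis using nonneg by eventually_elim (auto simp: order_le_less)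
qed

lemma AE_g_pos: "AE \<alpha> in D. \<forall>k m. 0 < gg \<alpha> k m"
proof -
  have "AE \<alpha> in D. gg \<alpha> k m \<noteq> 0" for k m
    by (rule AE_I'[OF NA[of "Inr (k, m)" 0]]) (auto simp: gain_coord_def)
  then have "AE \<alpha> in D. \<forall>k m. gg \<alpha> k m \<noteq> 0" by (intro eventually_all_finite) 
  then show ?thesis using nonneg by eventually_elim (auto simp: order_le_less)
qed

lemma cc_meas[measurable]: "(\<lambda>\<alpha>. cc l u \<alpha> k) \<in> borel_measurable D"
  unfolding cc_def by measurable

lemma pol_meas[measurable]: "(\<lambda>\<alpha>. pol l u i \<alpha>) \<in> borel_measurable D"
  unfolding pol_def by measurable

lemma LL_meas[measurable]:
  assumes [measurable]: "\<And>k. (\<lambda>\<alpha>. x k \<alpha>) \<in> borel_measurable D"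
  shows "(\<lambda>\<alpha>. LL l u (\<lambda>k. x k \<alpha>) \<alpha>) \<in> borel_measurable D"
  unfolding LL_def by measurable

lemma VV_meas[measurable]: "(\<lambda>\<alpha>. VV l u \<alpha>) \<in> borel_measurable D"
  unfolding VV_def by measurable

lemma tie_pair:
  assumes ij: "i \<noteq> j"
  shows "AE \<alpha> in D. 0 < cc l u \<alpha> i \<and> 0 < cc l u \<alpha> j \<longrightarrow> hh \<alpha> i / cc l u \<alpha> i \<noteq> hh \<alpha> j / cc l u \<alpha> j"
proof -
  define F where "F = (\<lambda>y::'k + ('k \<times> 'm) \<Rightarrow> real.
     (l i + (\<Sum>m\<in>UNIV. u m * y (Inr (i, m)))) * y (Inl j) / (l j + (\<Sum>m\<in>UNIV. u m * y (Inr (j, m)))))"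
  have c1: "(\<lambda>y. y (Inr (k, m))) \<in> borel_measurable (PiM (UNIV - {Inl i}) (\<lambda>_. borel))" for k m
    by (rule measurable_component_singleton) simp
  have c2: "(\<lambda>y. y (Inl j)) \<in> borel_measurable (PiM (UNIV - {Inl i}) (\<lambda>_. borel))"
    by (rule measurable_component_singleton) (use ij in auto)
  have Fm: "F \<in> borel_measurable (PiM (UNIV - {Inl i}) (\<lambda>_. borel))"
    unfolding F_def using c1 c2 by measurable
  have N: "{\<alpha> \<in> space D. gain_coord (Inl i) \<alpha> = F (restrict (\<lambda>j. gain_coord j \<alpha>) (UNIV - {Inl i}))} \<in> null_sets D"
    by (rule tie_null[OF prob indep NA Fm])
  have FF: "F (restrict (\<lambda>j. gain_coord j \<alpha>) (UNIV - {Inl i})) = cc l u \<alpha> i * hh \<alpha> j / cc l u \<alpha> j" for \<alpha>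
    using ij by (simp add: F_def cc_def gain_coord_def)
  show ?thesis
  proof (rule AE_I'[OF N], safe)
    fix \<alpha> assume a: "\<alpha> \<in> space D" "0 < cc l u \<alpha> i" "0 < cc l u \<alpha> j"
      "hh \<alpha> i / cc l u \<alpha> i = hh \<alpha> j / cc l u \<alpha> j"
    then have "hh \<alpha> i = cc l u \<alpha> i * hh \<alpha> j / cc l u \<alpha> j"
      by (simp add: field_simps)
    then show "gain_coord (Inl i) \<alpha> = F (restrict (\<lambda>j. gain_coord j \<alpha>) (UNIV - {Inl i}))"
      by (subst FF) (simp add: gain_coord_def)
  qed
qed

lemma AE_good:
  assumes "AE \<alpha> in D. \<forall>k. 0 < cc l u \<alpha> k"
  shows "AE \<alpha> in D. good l u \<alpha>"
proof -
  have "AE \<alpha> in D. \<forall>i j. i \<noteq> j \<longrightarrow> (0 < cc l u \<alpha> i \<and> 0 < cc l u \<alpha> j \<longrightarrow> hh \<alpha> i / cc l u \<alpha> i \<noteq> hh \<alpha> j / cc l u \<alpha> j)"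
  proof (intro eventually_all_finite)
    fix i j show "AE \<alpha> in D. i \<noteq> j \<longrightarrow> (0 < cc l u \<alpha> i \<and> 0 < cc l u \<alpha> j \<longrightarrow> hh \<alpha> i / cc l u \<alpha> i \<noteq> hh \<alpha> j / cc l u \<alpha> j)"
      by (cases "i = j") (auto intro: tie_pair)
  qed
  then show ?thesis using assms AE_h_pos nonneg
    by eventually_elim (auto simp: good_def)
qed

end

context setting begin

definition CC :: "('k \<Rightarrow> real) \<Rightarrow> ('m \<Rightarrow> real) \<Rightarrow> real" where
  "CC l u = (\<Sum>k\<in>UNIV. l k * PLT k) + (\<Sum>m\<in>UNIV. u m * GLT m)"

definition Lag :: "('k \<Rightarrow> real) \<Rightarrow> ('m \<Rightarrow> real) \<Rightarrow> ('k \<Rightarrow> ('k, 'm) chstate \<Rightarrow> real) \<Rightarrow> real" where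
  "Lag l u p = (\<integral>\<alpha>. ln (1 + (\<Sum>k\<in>UNIV. hh \<alpha> k * p k \<alpha>)) \<partial>D)
          - (\<Sum>k\<in>UNIV. l k * ((\<integral>\<alpha>. p k \<alpha> \<partial>D) - PLT k))
          - (\<Sum>m\<in>UNIV. u m * ((\<integral>\<alpha>. (\<Sum>k\<in>UNIV. gg \<alpha> k m * p k \<alpha>) \<partial>D) - GLT m))"

lemma dual_fun_eq: "dual_fun D PLT GLT l u = (SUP p \<in> {p. integrable_policy D p}. ereal (Lag l u p))"
  unfolding dual_fun_def Lag_def ..

lemma Lag_eq:
  assumes q: "integrable_policy D q"
  shows "Lag l u q = (\<integral>\<alpha>. LL l u (\<lambda>k. q k \<alpha>) \<alpha> \<partial>D) + CC l u"
    and "integrable D (\<lambda>\<alpha>. LL l u (\<lambda>k. q k \<alpha>) \<alpha>)"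
proof -
  have i1: "integrable D (q k)" for k using q by (simp add: integrable_policy_def)
  have i2: "integrable D (\<lambda>\<alpha>. \<Sum>k\<in>UNIV. gg \<alpha> k m * q k \<alpha>)" for m using q by (simp add: integrable_policy_def)
  have i3: "integrable D (\<lambda>\<alpha>. ln (1 + (\<Sum>k\<in>UNIV. hh \<alpha> k * q k \<alpha>)))" using q by (simp add: integrable_policy_def)
  have i4: "integrable D (\<lambda>\<alpha>. \<Sum>k\<in>UNIV. l k * q k \<alpha>)" using i1 by simp
  have i5: "integrable D (\<lambda>\<alpha>. \<Sum>m\<in>UNIV. u m * (\<Sum>k\<in>UNIV. gg \<alpha> k m * q k \<alpha>))" using i2 by simp
  have "(\<integral>\<alpha>. LL l u (\<lambda>k. q k \<alpha>) \<alpha> \<partial>D) = (\<integral>\<alpha>. ln (1 + (\<Sum>k\<in>UNIV. hh \<alpha> k * q k \<alpha>)) \<partial>D)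
      - (\<integral>\<alpha>. (\<Sum>k\<in>UNIV. l k * q k \<alpha>) \<partial>D) - (\<integral>\<alpha>. (\<Sum>m\<in>UNIV. u m * (\<Sum>k\<in>UNIV. gg \<alpha> k m * q k \<alpha>)) \<partial>D)"
    unfolding LL_def using i3 i4 i5 by (simp add: integral_diff)
  also have "(\<integral>\<alpha>. (\<Sum>k\<in>UNIV. l k * q k \<alpha>) \<partial>D) = (\<Sum>k\<in>UNIV. l k * (\<integral>\<alpha>. q k \<alpha> \<partial>D))"
    using i1 by (simp add: integral_sum)
  also have "(\<integral>\<alpha>. (\<Sum>m\<in>UNIV. u m * (\<Sum>k\<in>UNIV. gg \<alpha> k m * q k \<alpha>)) \<partial>D)
      = (\<Sum>m\<in>UNIV. u m * (\<integral>\<alpha>. (\<Sum>k\<in>UNIV. gg \<alpha> k m * q k \<alpha>) \<partial>D))"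
    using i2 by (simp add: integral_sum)
  finally show "Lag l u q = (\<integral>\<alpha>. LL l u (\<lambda>k. q k \<alpha>) \<alpha> \<partial>D) + CC l u"
    by (simp add: Lag_def CC_def right_diff_distrib sum_subtractf)
  show "integrable D (\<lambda>\<alpha>. LL l u (\<lambda>k. q k \<alpha>) \<alpha>)"
    unfolding LL_def using i3 i4 i5 by simp
qed

definition Bnd :: "real \<Rightarrow> ('k, 'm) chstate set" where
  "Bnd N = {\<alpha>. (\<forall>k. 0 \<le> hh \<alpha> k \<and> hh \<alpha> k \<le> N) \<and> (\<forall>k m. 0 \<le> gg \<alpha> k m \<and> gg \<alpha> k m \<le> N)}"

lemma bounded_policy:
  assumes meas: "\<And>k. q k \<in> borel_measurable D"
    and nn: "\<And>k \<alpha>. 0 \<le> q k \<alpha>" and le: "\<And>k \<alpha>. q k \<alpha> \<le> N"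
    and supp: "\<And>k \<alpha>. q k \<alpha> \<noteq> 0 \<Longrightarrow> \<alpha> \<in> Bnd N"
  shows "integrable_policy D q"
proof -
  have N0: "0 \<le> N" using nn[of undefined undefined] le[of undefined undefined] by linarith
  have hq: "0 \<le> hh \<alpha> k * q k \<alpha> \<and> hh \<alpha> k * q k \<alpha> \<le> N * N" for \<alpha> k
  proof (cases "q k \<alpha> = 0")
    case False
    then have "\<alpha> \<in> Bnd N" by (rule supp)
    then have "0 \<le> hh \<alpha> k" "hh \<alpha> k \<le> N" by (auto simp: Bnd_def)
    then show ?thesis using nn[of k \<alpha>] le[of k \<alpha>] by (auto intro: mult_mono)
  qed (simp add: N0)
  have gq: "0 \<le> gg \<alpha> k m * q k \<alpha> \<and> gg \<alpha> k m * q k \<alpha> \<le> N * N" for \<alpha> k m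
  proof (cases "q k \<alpha> = 0")
    case False
    then have "\<alpha> \<in> Bnd N" by (rule supp)
    then have "0 \<le> gg \<alpha> k m" "gg \<alpha> k m \<le> N" by (auto simp: Bnd_def)
    then show ?thesis using nn[of k \<alpha>] le[of k \<alpha>] by (auto intro: mult_mono)
  qed (simp add: N0)
  have [measurable]: "\<And>k. (\<lambda>\<alpha>. q k \<alpha>) \<in> borel_measurable D" using meas by simp
  have s1: "0 \<le> (\<Sum>k\<in>UNIV. hh \<alpha> k * q k \<alpha>)" for \<alpha> using hq by (intro sum_nonneg) auto
  have s2: "(\<Sum>k\<in>UNIV. hh \<alpha> k * q k \<alpha>) \<le> real CARD('k) * (N * N)" for \<alpha>
    using sum_mono[of UNIV "\<lambda>k. hh \<alpha> k * q k \<alpha>" "\<lambda>_. N * N"] hq by simp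
  have "integrable D (\<lambda>\<alpha>. ln (1 + (\<Sum>k\<in>UNIV. hh \<alpha> k * q k \<alpha>)))"
  proof (rule integrable_const_bound[where B = "real CARD('k) * (N * N)"])
    show "AE \<alpha> in D. norm (ln (1 + (\<Sum>k\<in>UNIV. hh \<alpha> k * q k \<alpha>))) \<le> real CARD('k) * (N * N)"
    proof (rule AE_I2)
      fix \<alpha>
      have "ln (1 + (\<Sum>k\<in>UNIV. hh \<alpha> k * q k \<alpha>)) \<le> (\<Sum>k\<in>UNIV. hh \<alpha> k * q k \<alpha>)"
        using ln_le_minus_one[of "1 + (\<Sum>k\<in>UNIV. hh \<alpha> k * q k \<alpha>)"] s1[of \<alpha>] by simp
      moreover have "0 \<le> ln (1 + (\<Sum>k\<in>UNIV. hh \<alpha> k * q k \<alpha>))" using s1[of \<alpha>] by simp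
      ultimately show "norm (ln (1 + (\<Sum>k\<in>UNIV. hh \<alpha> k * q k \<alpha>))) \<le> real CARD('k) * (N * N)"
        using s2[of \<alpha>] by simp
    qed
  qed measurable
  moreover have "integrable D (\<lambda>\<alpha>. \<Sum>k\<in>UNIV. gg \<alpha> k m * q k \<alpha>)" for m
  proof (rule integrable_const_bound[where B = "real CARD('k) * (N * N)"])
    show "AE \<alpha> in D. norm (\<Sum>k\<in>UNIV. gg \<alpha> k m * q k \<alpha>) \<le> real CARD('k) * (N * N)"
    proof (rule AE_I2)
      fix \<alpha>
      have "0 \<le> (\<Sum>k\<in>UNIV. gg \<alpha> k m * q k \<alpha>)" using gq by (intro sum_nonneg) auto
      moreover have "(\<Sum>k\<in>UNIV. gg \<alpha> k m * q k \<alpha>) \<le> real CARD('k) * (N * N)"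
        using sum_mono[of UNIV "\<lambda>k. gg \<alpha> k m * q k \<alpha>" "\<lambda>_. N * N"] gq by simp
      ultimately show "norm (\<Sum>k\<in>UNIV. gg \<alpha> k m * q k \<alpha>) \<le> real CARD('k) * (N * N)" by simp
    qed
  qed measurable
  moreover have "integrable D (q k)" for k
    by (rule integrable_const_bound[where B = N]) (use nn le meas in auto)
  ultimately show ?thesis using meas nn by (simp add: integrable_policy_def policy_def)
qed

lemma Bnd_meas[measurable]: "Bnd N \<in> sets D"
proof -
  have "Bnd N = {\<alpha> \<in> space D. (\<forall>k. 0 \<le> hh \<alpha> k \<and> hh \<alpha> k \<le> N) \<and> (\<forall>k m. 0 \<le> gg \<alpha> k m \<and> gg \<alpha> k m \<le> N)}"
    by (simp add: Bnd_def space_D)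
  also have "\<dots> \<in> sets D" by measurable
  finally show ?thesis .
qed

end

context setting begin

lemma lam_nn: "0 \<le> lam k" and mu_nn: "0 \<le> mu m"
  using dual_opt by (auto simp: dual_optimal_def)

lemma G_fin: "dual_fun D PLT GLT lam mu < \<infinity>"
  using dual_opt by (simp add: dual_optimal_def)

lemma G_opt: "(\<forall>k. 0 \<le> l k) \<Longrightarrow> (\<forall>m. 0 \<le> u m) \<Longrightarrow> dual_fun D PLT GLT lam mu \<le> dual_fun D PLT GLT l u"
  using dual_opt by (simp add: dual_optimal_def)

definition Gs :: real where "Gs = real_of_ereal (dual_fun D PLT GLT lam mu)"

lemma LL_zero: "LL l u (\<lambda>k. 0) \<alpha> = 0"
  by (simp add: LL_def)

lemma zero_policy: "integrable_policy D (\<lambda>k \<alpha>. 0)"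
  by (rule bounded_policy[where N = 0]) auto

lemma Lag_zero: "Lag l u (\<lambda>k \<alpha>. 0) = CC l u"
  using Lag_eq(1)[OF zero_policy, of l u] by (simp add: LL_zero)

lemma G_eq: "dual_fun D PLT GLT lam mu = ereal Gs"
proof -
  have "ereal (Lag lam mu (\<lambda>k \<alpha>. 0)) \<le> dual_fun D PLT GLT lam mu"
    unfolding dual_fun_eq using zero_policy by (intro SUP_upper) auto
  then have "dual_fun D PLT GLT lam mu \<noteq> -\<infinity>" by auto
  with G_fin show ?thesis unfolding Gs_def by (cases "dual_fun D PLT GLT lam mu") auto
qed

lemma Lag_le_Gs: "integrable_policy D q \<Longrightarrow> Lag lam mu q \<le> Gs"
proof -
  assume q: "integrable_policy D q"
  have "ereal (Lag lam mu q) \<le> dual_fun D PLT GLT lam mu"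
    unfolding dual_fun_eq using q by (intro SUP_upper) auto
  then show ?thesis by (simp add: G_eq)
qed

lemma CC_le_Gs: "CC lam mu \<le> Gs"
  using Lag_le_Gs[OF zero_policy] by (simp add: Lag_zero)

lemma VV_nonneg: "good l u \<alpha> \<Longrightarrow> 0 \<le> VV l u \<alpha>"
  using P1[of l u \<alpha> "\<lambda>k. 0"] by (simp add: LL_zero)

lemma dual_upper:
  assumes g: "AE \<alpha> in D. good l u \<alpha>" and iV: "integrable D (VV l u)"
  shows "dual_fun D PLT GLT l u \<le> ereal ((\<integral>\<alpha>. VV l u \<alpha> \<partial>D) + CC l u)"
  unfolding dual_fun_eq
proof (rule SUP_least)
  fix q assume "q \<in> {p. integrable_policy D p}"
  then have q: "integrable_policy D q" by simp
  then have qn: "0 \<le> q k \<alpha>" for k \<alpha> unfolding integrable_policy_def policy_def by blast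
  have "(\<integral>\<alpha>. LL l u (\<lambda>k. q k \<alpha>) \<alpha> \<partial>D) \<le> (\<integral>\<alpha>. VV l u \<alpha> \<partial>D)"
    using Lag_eq(2)[OF q, of l u] iV
  proof (rule integral_mono_AE)
    show "AE \<alpha> in D. LL l u (\<lambda>k. q k \<alpha>) \<alpha> \<le> VV l u \<alpha>"
      using g by eventually_elim (rule P1, auto simp: qn)
  qed
  then show "ereal (Lag l u q) \<le> ereal ((\<integral>\<alpha>. VV l u \<alpha> \<partial>D) + CC l u)"
    by (simp add: Lag_eq(1)[OF q])
qed

lemma KEY:
  assumes "\<forall>k. 0 \<le> l k" "\<forall>m. 0 \<le> u m" "AE \<alpha> in D. good l u \<alpha>" "integrable D (VV l u)"
  shows "Gs \<le> (\<integral>\<alpha>. VV l u \<alpha> \<partial>D) + CC l u"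
proof -
  have "ereal Gs \<le> ereal ((\<integral>\<alpha>. VV l u \<alpha> \<partial>D) + CC l u)"
    using G_opt[OF assms(1,2)] dual_upper[OF assms(3,4)] unfolding G_eq by (rule order_trans)
  then show ?thesis by simp
qed

end

context setting begin

lemma in_Bnd:
  assumes h: "\<forall>k. 0 \<le> hh \<alpha> k" and g: "\<forall>k m. 0 \<le> gg \<alpha> k m"
    and le: "(\<Sum>k\<in>UNIV. hh \<alpha> k) + (\<Sum>k\<in>UNIV. \<Sum>m\<in>UNIV. gg \<alpha> k m) \<le> N"
  shows "\<alpha> \<in> Bnd N"
proof -
  have s1: "0 \<le> (\<Sum>k\<in>UNIV. hh \<alpha> k)" using h by (intro sum_nonneg) auto
  have s2: "0 \<le> (\<Sum>k\<in>UNIV. \<Sum>m\<in>UNIV. gg \<alpha> k m)" using g by (intro sum_nonneg) auto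
  have "hh \<alpha> k \<le> N" for k
  proof -
    have "hh \<alpha> k \<le> (\<Sum>k\<in>UNIV. hh \<alpha> k)" using h by (intro member_le_sum) auto
    then show ?thesis using le s2 by linarith
  qed
  moreover have "gg \<alpha> k m \<le> N" for k m
  proof -
    have "gg \<alpha> k m \<le> (\<Sum>m\<in>UNIV. gg \<alpha> k m)" using g by (intro member_le_sum) auto
    also have "\<dots> \<le> (\<Sum>k\<in>UNIV. \<Sum>m\<in>UNIV. gg \<alpha> k m)" using g by (intro member_le_sum sum_nonneg) auto
    finally show ?thesis using le s1 by linarith
  qed
  ultimately show ?thesis using h g by (auto simp: Bnd_def)
qed

lemma Bnd_mono: "N \<le> N' \<Longrightarrow> Bnd N \<subseteq> Bnd N'"
  by (auto simp: Bnd_def intro: order_trans)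

lemma not_zero_case:
  assumes l0: "lam k = 0" and u0: "\<forall>m. mu m = 0"
  shows False
proof -
  define B where "B n = Bnd (real n + 1) \<inter> {\<alpha>. 1 / (real n + 1) \<le> hh \<alpha> k}" for n :: nat
  have Bm[measurable]: "B n \<in> sets D" for n
  proof -
    have "B n = Bnd (real n + 1) \<inter> {\<alpha> \<in> space D. 1 / (real n + 1) \<le> hh \<alpha> k}" by (auto simp: B_def space_D)
    also have "\<dots> \<in> sets D" by measurable
    finally show ?thesis .
  qed
  have "\<exists>n. 0 < measure D (B n)"
  proof (rule ccontr)
    assume "\<not> ?thesis"
    then have "measure D (B n) = 0" for n using measure_nonneg[of D "B n"] by (metis not_less order.antisym)
    then have "B n \<in> null_sets D" for n using Bm by (simp add: emeasure_eq_measure null_sets_def)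
    then have "(\<Union>n. B n) \<in> null_sets D" by (rule null_sets_UN)
    then have "AE \<alpha> in D. \<alpha> \<notin> (\<Union>n. B n)" by (rule AE_not_in)
    then have "AE \<alpha> in D. False" using AE_h_pos nonneg
    proof eventually_elim
      case (elim \<alpha>)
      obtain n :: nat where n: "(\<Sum>k\<in>UNIV. hh \<alpha> k) + (\<Sum>k\<in>UNIV. \<Sum>m\<in>UNIV. gg \<alpha> k m) + 1 / hh \<alpha> k \<le> real n"
        using real_arch_simple by blast
      have hk: "0 < hh \<alpha> k" using elim by auto
      have "0 \<le> (\<Sum>k\<in>UNIV. hh \<alpha> k) + (\<Sum>k\<in>UNIV. \<Sum>m\<in>UNIV. gg \<alpha> k m)"
        using elim by (intro add_nonneg_nonneg sum_nonneg) (auto simp: less_imp_le)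
      then have "1 / hh \<alpha> k \<le> real n + 1" using n by linarith
      then have "1 \<le> (real n + 1) * hh \<alpha> k" using pos_divide_le_eq[OF hk, of 1 "real n + 1"] by simp
      then have "1 \<le> hh \<alpha> k * (real n + 1)" by (simp only: mult.commute)
      moreover have "0 < real n + 1" by simp
      ultimately have "1 / (real n + 1) \<le> hh \<alpha> k" using pos_divide_le_eq[of "real n + 1" 1 "hh \<alpha> k"] by simp
      moreover have "\<alpha> \<in> Bnd (real n + 1)"
      proof (rule in_Bnd)
        show "\<forall>k. 0 \<le> hh \<alpha> k" "\<forall>k m. 0 \<le> gg \<alpha> k m" using elim by (auto simp: less_imp_le)
        have "0 \<le> 1 / hh \<alpha> k" using hk by simp
        then show "(\<Sum>k\<in>UNIV. hh \<alpha> k) + (\<Sum>k\<in>UNIV. \<Sum>m\<in>UNIV. gg \<alpha> k m) \<le> real n + 1"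
          using n by linarith
      qed
      ultimately have "\<alpha> \<in> B n" by (simp add: B_def)
      then show False using elim by auto
    qed
    then show False by simp
  qed
  then obtain n where p: "0 < measure D (B n)" by blast
  define p where "p = measure D (B n)"
  define M where "M = (Gs - CC lam mu + 1) / p"
  define Nv where "Nv = exp M * (real n + 1)"
  have Nv0: "0 < Nv" by (simp add: Nv_def add_pos_nonneg)
  define q where "q j \<alpha> = (if j = k \<and> \<alpha> \<in> B n then Nv else 0)" for j \<alpha>
  have qm: "q j \<in> borel_measurable D" for j unfolding q_def by measurable
  have qi: "integrable_policy D q"
  proof (rule bounded_policy[where N = "max Nv (real n + 1)"])
    show "q j \<in> borel_measurable D" for j by (rule qm)
    show "0 \<le> q j \<alpha>" for j \<alpha> using Nv0 by (simp add: q_def)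
    show "q j \<alpha> \<le> max Nv (real n + 1)" for j \<alpha> using Nv0 by (simp add: q_def max_def)
    show "\<alpha> \<in> Bnd (max Nv (real n + 1))" if "q j \<alpha> \<noteq> 0" for j \<alpha>
    proof -
      have "\<alpha> \<in> B n" using that by (simp add: q_def split: if_splits)
      then have "\<alpha> \<in> Bnd (real n + 1)" by (simp add: B_def)
      then show ?thesis using Bnd_mono[of "real n + 1" "max Nv (real n + 1)"] by auto
    qed
  qed
  have LLq: "LL lam mu (\<lambda>j. q j \<alpha>) \<alpha> = ln (1 + hh \<alpha> k * q k \<alpha>)" for \<alpha>
  proof -
    have "(\<Sum>j\<in>UNIV. hh \<alpha> j * q j \<alpha>) = hh \<alpha> k * q k \<alpha>"
      by (subst sum.remove[of _ k]) (auto simp: q_def)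
    moreover have "(\<Sum>j\<in>UNIV. lam j * q j \<alpha>) = 0"
      by (subst sum.remove[of _ k]) (auto simp: q_def l0)
    ultimately show ?thesis by (simp add: LL_def u0)
  qed
  have lb: "M * indicator (B n) \<alpha> \<le> LL lam mu (\<lambda>j. q j \<alpha>) \<alpha>" for \<alpha>
  proof (cases "\<alpha> \<in> B n")
    case True
    then have hk: "1 / (real n + 1) \<le> hh \<alpha> k" by (simp add: B_def)
    have "exp M = (1 / (real n + 1)) * Nv" by (simp add: Nv_def)
    also have "\<dots> \<le> hh \<alpha> k * Nv" using hk Nv0 by (intro mult_right_mono) auto
    also have "\<dots> < 1 + hh \<alpha> k * q k \<alpha>" using True by (simp add: q_def)
    finally have lt: "exp M < 1 + hh \<alpha> k * q k \<alpha>" .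
    then have "ln (exp M) < ln (1 + hh \<alpha> k * q k \<alpha>)"
      by (subst ln_less_cancel_iff) (auto intro: less_trans[OF exp_gt_zero])
    then have "M < ln (1 + hh \<alpha> k * q k \<alpha>)" by simp
    then show ?thesis using True by (simp add: LLq)
  next
    case False
    then show ?thesis by (simp add: q_def LL_zero)
  qed
  have "M * p \<le> (\<integral>\<alpha>. LL lam mu (\<lambda>j. q j \<alpha>) \<alpha> \<partial>D)"
  proof -
    have "(\<integral>\<alpha>. M * indicator (B n) \<alpha> \<partial>D) \<le> (\<integral>\<alpha>. LL lam mu (\<lambda>j. q j \<alpha>) \<alpha> \<partial>D)"
    proof (rule integral_mono)
      have "integrable D (indicator (B n) :: _ \<Rightarrow> real)"
        by (rule integrable_const_bound[where B=1]) (auto split: split_indicator intro: borel_measurable_indicator[OF Bm])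
      then show "integrable D (\<lambda>\<alpha>. M * indicator (B n) \<alpha>)" by simp
    qed (use lb Lag_eq(2)[OF qi, of lam mu] in auto)
    moreover have "(\<integral>\<alpha>. M * indicator (B n) \<alpha> \<partial>D) = M * p"
      by (simp add: p_def space_D)
    ultimately show ?thesis by linarith
  qed
  moreover have "M * p = Gs - CC lam mu + 1" using p by (simp add: M_def p_def)
  ultimately have "Gs + 1 \<le> Lag lam mu q" by (simp add: Lag_eq(1)[OF qi])
  then show False using Lag_le_Gs[OF qi] by simp
qed

lemma cpos_star: "AE \<alpha> in D. \<forall>k. 0 < cc lam mu \<alpha> k"
proof (rule eventually_all_finite)
  fix k
  show "AE \<alpha> in D. 0 < cc lam mu \<alpha> k"
  proof (cases "0 < lam k")
    case True
    show ?thesis using nonneg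
    proof eventually_elim
      case (elim \<alpha>)
      have "0 \<le> (\<Sum>m\<in>UNIV. mu m * gg \<alpha> k m)" using elim mu_nn by (intro sum_nonneg) auto
      then show ?case using True by (simp add: cc_def)
    qed
  next
    case False
    then have l0: "lam k = 0" using lam_nn[of k] by simp
    show ?thesis
    proof (cases "\<exists>m. 0 < mu m")
      case True
      then obtain m where m: "0 < mu m" by blast
      show ?thesis using AE_g_pos
      proof eventually_elim
        case (elim \<alpha>)
        have "mu m * gg \<alpha> k m \<le> (\<Sum>m\<in>UNIV. mu m * gg \<alpha> k m)"
          using elim mu_nn by (intro member_le_sum) (auto simp: less_imp_le)
        moreover have "0 < mu m * gg \<alpha> k m" using elim m by simp
        ultimately show ?case using l0 by (simp add: cc_def)
      qed
    next
      case False
      then have "\<forall>m. mu m = 0" using mu_nn by (metis order.order_iff_strict)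
      with not_zero_case[OF l0] show ?thesis by blast
    qed
  qed
qed

lemma good_star: "AE \<alpha> in D. good lam mu \<alpha>"
  by (rule AE_good[OF cpos_star])

end

context setting begin

lemma lower_star:
  shows "integrable D (VV lam mu)" and "(\<integral>\<alpha>. VV lam mu \<alpha> \<partial>D) + CC lam mu \<le> Gs"
proof -
  define A where "A n = Bnd (real n) \<inter> {\<alpha>. \<forall>k. pol lam mu k \<alpha> \<le> real n}" for n :: nat
  have Am[measurable]: "A n \<in> sets D" for n
  proof -
    have "A n = Bnd (real n) \<inter> {\<alpha> \<in> space D. \<forall>k. pol lam mu k \<alpha> \<le> real n}" by (auto simp: A_def space_D)
    also have "\<dots> \<in> sets D" by measurable
    finally show ?thesis .
  qed
  define q where "q n k \<alpha> = pol lam mu k \<alpha> * indicator (A n) \<alpha>" for n k \<alpha>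
  have qm: "q n k \<in> borel_measurable D" for n k unfolding q_def by measurable
  have qi: "integrable_policy D (q n)" for n
  proof (rule bounded_policy[where N = "real n"])
    show "q n k \<in> borel_measurable D" for k by (rule qm)
    show "0 \<le> q n k \<alpha>" for k \<alpha> by (simp add: q_def pol_nonneg)
    show "q n k \<alpha> \<le> real n" for k \<alpha> by (simp add: q_def A_def split: split_indicator)
    show "\<alpha> \<in> Bnd (real n)" if "q n k \<alpha> \<noteq> 0" for k \<alpha>
      using that by (simp add: q_def A_def split: split_indicator_asm)
  qed
  have LLq: "LL lam mu (\<lambda>k. q n k \<alpha>) \<alpha> = VV lam mu \<alpha> * indicator (A n) \<alpha>" for n \<alpha>
    by (cases "\<alpha> \<in> A n") (simp_all add: q_def VV_def LL_zero)
  have Vm: "VV lam mu \<in> borel_measurable D" by measurable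
  have AEV: "AE \<alpha> in D. 0 \<le> VV lam mu \<alpha>" using good_star by eventually_elim (rule VV_nonneg)
  define f where "f n \<alpha> = ennreal (VV lam mu \<alpha> * indicator (A n) \<alpha>)" for n \<alpha>
  have fle: "(\<integral>\<^sup>+\<alpha>. f n \<alpha> \<partial>D) \<le> ennreal (Gs - CC lam mu)" for n
  proof -
    have iL: "integrable D (\<lambda>\<alpha>. VV lam mu \<alpha> * indicator (A n) \<alpha>)"
      using Lag_eq(2)[OF qi[of n], of lam mu] by (simp add: LLq)
    have "(\<integral>\<^sup>+\<alpha>. f n \<alpha> \<partial>D) = ennreal (\<integral>\<alpha>. VV lam mu \<alpha> * indicator (A n) \<alpha> \<partial>D)"
      unfolding f_def using iL AEV by (intro nn_integral_eq_integral) (auto elim!: eventually_mono split: split_indicator)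
    moreover have "(\<integral>\<alpha>. VV lam mu \<alpha> * indicator (A n) \<alpha> \<partial>D) + CC lam mu \<le> Gs"
      using Lag_le_Gs[OF qi[of n]] Lag_eq(1)[OF qi[of n], of lam mu] by (simp add: LLq)
    ultimately show ?thesis by (simp add: ennreal_leI)
  qed
  have inc: "AE \<alpha> in D. f n \<alpha> \<le> f (Suc n) \<alpha>" for n
    using AEV
  proof eventually_elim
    case (elim \<alpha>)
    have "A n \<subseteq> A (Suc n)" using Bnd_mono[of "real n" "real (Suc n)"] by (auto simp: A_def intro: order_trans)
    then show ?case using elim unfolding f_def by (auto intro!: ennreal_leI split: split_indicator)
  qed
  have sup: "AE \<alpha> in D. (SUP n. f n \<alpha>) = ennreal (VV lam mu \<alpha>)"
    using AEV nonneg
  proof eventually_elim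
    case (elim \<alpha>)
    obtain n :: nat where n: "(\<Sum>k\<in>UNIV. hh \<alpha> k) + (\<Sum>k\<in>UNIV. \<Sum>m\<in>UNIV. gg \<alpha> k m) + (\<Sum>k\<in>UNIV. pol lam mu k \<alpha>) \<le> real n"
      using real_arch_simple by blast
    have sp: "0 \<le> (\<Sum>k\<in>UNIV. pol lam mu k \<alpha>)" by (intro sum_nonneg) (simp add: pol_nonneg)
    have s12: "0 \<le> (\<Sum>k\<in>UNIV. hh \<alpha> k) + (\<Sum>k\<in>UNIV. \<Sum>m\<in>UNIV. gg \<alpha> k m)"
      using elim by (intro add_nonneg_nonneg sum_nonneg) auto
    have "\<alpha> \<in> Bnd (real n)" using elim n sp by (intro in_Bnd) auto
    moreover have "pol lam mu k \<alpha> \<le> real n" for k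
    proof -
      have "pol lam mu k \<alpha> \<le> (\<Sum>k\<in>UNIV. pol lam mu k \<alpha>)" by (intro member_le_sum) (auto simp: pol_nonneg)
      then show ?thesis using n s12 by linarith
    qed
    ultimately have "\<alpha> \<in> A n" by (simp add: A_def)
    then have fn: "f n \<alpha> = ennreal (VV lam mu \<alpha>)" by (simp add: f_def)
    show ?case
    proof (rule antisym)
      show "(SUP n. f n \<alpha>) \<le> ennreal (VV lam mu \<alpha>)"
        by (rule SUP_least) (auto simp: f_def intro!: ennreal_leI split: split_indicator)
      show "ennreal (VV lam mu \<alpha>) \<le> (SUP n. f n \<alpha>)" unfolding fn[symmetric] by (rule SUP_upper) simp
    qed
  qed
  have fm: "f n \<in> borel_measurable D" for n unfolding f_def by measurable
  have "(\<integral>\<^sup>+\<alpha>. ennreal (VV lam mu \<alpha>) \<partial>D) = (\<integral>\<^sup>+\<alpha>. (SUP n. f n \<alpha>) \<partial>D)"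
    using sup by (intro nn_integral_cong_AE) (auto elim!: eventually_mono)
  also have "\<dots> = (SUP n. \<integral>\<^sup>+\<alpha>. f n \<alpha> \<partial>D)"
    by (rule nn_integral_monotone_convergence_SUP_AE) (use inc fm in auto)
  also have "\<dots> \<le> ennreal (Gs - CC lam mu)" by (rule SUP_least) (rule fle)
  finally have nnV: "(\<integral>\<^sup>+\<alpha>. ennreal (VV lam mu \<alpha>) \<partial>D) \<le> ennreal (Gs - CC lam mu)" .
  show iV: "integrable D (VV lam mu)"
    using Vm AEV nnV by (intro integrableI_nonneg) (auto simp: top_unique intro: le_less_trans)
  have "ennreal (\<integral>\<alpha>. VV lam mu \<alpha> \<partial>D) \<le> ennreal (Gs - CC lam mu)"
    using nnV nn_integral_eq_integral[OF iV AEV] by simp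
  then show "(\<integral>\<alpha>. VV lam mu \<alpha> \<partial>D) + CC lam mu \<le> Gs"
    using CC_le_Gs by (simp add: ennreal_le_iff)
qed

end

lemma LL_shift_l: "LL (l(k := l k + t)) u x \<alpha> = LL l u x \<alpha> - t * x k"
proof -
  have "(\<Sum>j\<in>UNIV. (l(k := l k + t)) j * x j) = (\<Sum>j\<in>UNIV. l j * x j + (if j = k then t * x k else 0))"
    by (intro sum.cong) (auto simp: algebra_simps)
  also have "\<dots> = (\<Sum>j\<in>UNIV. l j * x j) + t * x k" by (simp add: sum.distrib)
  finally show ?thesis by (simp add: LL_def)
qed

lemma LL_shift_u: "LL l (u(m := u m + t)) x \<alpha> = LL l u x \<alpha> - t * (\<Sum>k\<in>UNIV. gg \<alpha> k m * x k)"
proof -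
  have "(\<Sum>j\<in>UNIV. (u(m := u m + t)) j * (\<Sum>k\<in>UNIV. gg \<alpha> k j * x k))
     = (\<Sum>j\<in>UNIV. u j * (\<Sum>k\<in>UNIV. gg \<alpha> k j * x k) + (if j = m then t * (\<Sum>k\<in>UNIV. gg \<alpha> k m * x k) else 0))"
    by (intro sum.cong) (auto simp: algebra_simps)
  also have "\<dots> = (\<Sum>j\<in>UNIV. u j * (\<Sum>k\<in>UNIV. gg \<alpha> k j * x k)) + t * (\<Sum>k\<in>UNIV. gg \<alpha> k m * x k)"
    by (simp add: sum.distrib)
  finally show ?thesis by (simp add: LL_def)
qed

lemma cc_shift_l: "cc (l(k := l k + t)) u \<alpha> j = cc l u \<alpha> j + (if j = k then t else 0)"
  by (simp add: cc_def)

lemma cc_shift_u: "cc l (u(m := u m + t)) \<alpha> j = cc l u \<alpha> j + t * gg \<alpha> j m"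
proof -
  have "(\<Sum>i\<in>UNIV. (u(m := u m + t)) i * gg \<alpha> j i) = (\<Sum>i\<in>UNIV. u i * gg \<alpha> j i + (if i = m then t * gg \<alpha> j m else 0))"
    by (intro sum.cong) (auto simp: algebra_simps)
  then show ?thesis by (simp add: cc_def sum.distrib)
qed

context setting begin

lemma CC_shift_l: "CC (l(k := l k + t)) u = CC l u + t * PLT k"
proof -
  have "(\<Sum>j\<in>UNIV. (l(k := l k + t)) j * PLT j) = (\<Sum>j\<in>UNIV. l j * PLT j + (if j = k then t * PLT k else 0))"
    by (intro sum.cong) (auto simp: algebra_simps)
  then show ?thesis by (simp add: CC_def sum.distrib)
qed

lemma CC_shift_u: "CC l (u(m := u m + t)) = CC l u + t * GLT m"
proof -
  have "(\<Sum>j\<in>UNIV. (u(m := u m + t)) j * GLT j) = (\<Sum>j\<in>UNIV. u j * GLT j + (if j = m then t * GLT m else 0))"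
    by (intro sum.cong) (auto simp: algebra_simps)
  then show ?thesis by (simp add: CC_def sum.distrib)
qed

lemma upward_generic:
  fixes L :: "nat \<Rightarrow> 'k \<Rightarrow> real" and U :: "nat \<Rightarrow> 'm \<Rightarrow> real" and t :: "nat \<Rightarrow> real"
    and Z :: "nat \<Rightarrow> ('k, 'm) chstate \<Rightarrow> real" and Z0 :: "('k, 'm) chstate \<Rightarrow> real"
  assumes LU_nn: "\<And>n. (\<forall>k. 0 \<le> L n k) \<and> (\<forall>m. 0 \<le> U n m)"
    and gd: "\<And>n. AE \<alpha> in D. good (L n) (U n) \<alpha>"
    and t: "\<And>n. 0 < t n"
    and CCeq: "\<And>n. CC (L n) (U n) = CC lam mu + t n * c0"
    and Zm: "\<And>n. Z n \<in> borel_measurable D"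
    and Znn: "\<And>n. AE \<alpha> in D. 0 \<le> Z n \<alpha>"
    and ptw: "\<And>n. AE \<alpha> in D. VV (L n) (U n) \<alpha> + t n * Z n \<alpha> \<le> VV lam mu \<alpha>"
    and conv: "AE \<alpha> in D. (\<lambda>n. Z n \<alpha>) \<longlonglongrightarrow> Z0 \<alpha>"
  shows "(\<integral>\<^sup>+\<alpha>. ennreal (Z0 \<alpha>) \<partial>D) \<le> ennreal c0"
proof -
  note iV0 = lower_star(1) and low = lower_star(2)
  have bnd: "ennreal (\<integral>\<alpha>. Z n \<alpha> \<partial>D) \<le> ennreal c0" and eqn: "(\<integral>\<^sup>+\<alpha>. ennreal (Z n \<alpha>) \<partial>D) = ennreal (\<integral>\<alpha>. Z n \<alpha> \<partial>D)" for n
  proof -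
    have Vn0: "AE \<alpha> in D. 0 \<le> VV (L n) (U n) \<alpha>" using gd[of n] by eventually_elim (rule VV_nonneg)
    have iVn: "integrable D (VV (L n) (U n))"
    proof (rule Bochner_Integration.integrable_bound[OF iV0])
      show "VV (L n) (U n) \<in> borel_measurable D" by measurable
      show "AE \<alpha> in D. norm (VV (L n) (U n) \<alpha>) \<le> norm (VV lam mu \<alpha>)"
        using Vn0 ptw[of n] Znn[of n]
      proof eventually_elim
        case (elim \<alpha>)
        have "0 \<le> t n * Z n \<alpha>" using t[of n] elim by simp
        then show ?case using elim by simp
      qed
    qed
    have iZ: "integrable D (\<lambda>\<alpha>. t n * Z n \<alpha>)"
    proof (rule Bochner_Integration.integrable_bound[OF iV0])
      show "(\<lambda>\<alpha>. t n * Z n \<alpha>) \<in> borel_measurable D" using Zm[of n] by measurable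
      show "AE \<alpha> in D. norm (t n * Z n \<alpha>) \<le> norm (VV lam mu \<alpha>)"
        using Vn0 ptw[of n] Znn[of n]
      proof eventually_elim
        case (elim \<alpha>)
        have "0 \<le> t n * Z n \<alpha>" using t[of n] elim by simp
        then show ?case using elim by simp
      qed
    qed
    then have iZ': "integrable D (Z n)" using t[of n] by simp
    have "Gs \<le> (\<integral>\<alpha>. VV (L n) (U n) \<alpha> \<partial>D) + CC (L n) (U n)"
      using LU_nn[of n] gd[of n] iVn by (intro KEY) auto
    moreover have "(\<integral>\<alpha>. VV (L n) (U n) \<alpha> + t n * Z n \<alpha> \<partial>D) \<le> (\<integral>\<alpha>. VV lam mu \<alpha> \<partial>D)"
      using iVn iZ iV0 ptw[of n] by (intro integral_mono_AE) auto
    moreover have "(\<integral>\<alpha>. VV (L n) (U n) \<alpha> + t n * Z n \<alpha> \<partial>D) = (\<integral>\<alpha>. VV (L n) (U n) \<alpha> \<partial>D) + t n * (\<integral>\<alpha>. Z n \<alpha> \<partial>D)"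
      using iVn iZ' by simp
    ultimately have "t n * (\<integral>\<alpha>. Z n \<alpha> \<partial>D) \<le> t n * c0" using low CCeq[of n] by linarith
    then have "(\<integral>\<alpha>. Z n \<alpha> \<partial>D) \<le> c0" using t[of n] by simp
    then show "ennreal (\<integral>\<alpha>. Z n \<alpha> \<partial>D) \<le> ennreal c0" by (rule ennreal_leI)
    show "(\<integral>\<^sup>+\<alpha>. ennreal (Z n \<alpha>) \<partial>D) = ennreal (\<integral>\<alpha>. Z n \<alpha> \<partial>D)"
      using iZ' Znn[of n] by (rule nn_integral_eq_integral)
  qed
  have "(\<integral>\<^sup>+\<alpha>. ennreal (Z0 \<alpha>) \<partial>D) = (\<integral>\<^sup>+\<alpha>. liminf (\<lambda>n. ennreal (Z n \<alpha>)) \<partial>D)"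
    using conv
  proof (intro nn_integral_cong_AE, eventually_elim)
    case (elim \<alpha>)
    have "(\<lambda>n. ennreal (Z n \<alpha>)) \<longlonglongrightarrow> ennreal (Z0 \<alpha>)" using elim by (auto intro: tendsto_ennrealI)
    then show ?case by (simp add: lim_imp_Liminf)
  qed
  also have "\<dots> \<le> liminf (\<lambda>n. \<integral>\<^sup>+\<alpha>. ennreal (Z n \<alpha>) \<partial>D)"
    by (rule nn_integral_liminf) (use Zm in measurable)
  also have "\<dots> \<le> ennreal c0"
    by (rule Liminf_le) (auto simp: eqn bnd)
  finally show ?thesis .
qed

lemma downward_generic:
  fixes L :: "nat \<Rightarrow> 'k \<Rightarrow> real" and U :: "nat \<Rightarrow> 'm \<Rightarrow> real" and t :: "nat \<Rightarrow> real"
    and Z :: "nat \<Rightarrow> ('k, 'm) chstate \<Rightarrow> real" and Z0 :: "('k, 'm) chstate \<Rightarrow> real"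
  assumes LU_nn: "\<And>n. (\<forall>k. 0 \<le> L n k) \<and> (\<forall>m. 0 \<le> U n m)"
    and gd: "\<And>n. AE \<alpha> in D. good (L n) (U n) \<alpha>"
    and t: "\<And>n. 0 < t n"
    and CCeq: "\<And>n. CC (L n) (U n) = CC lam mu - t n * c0"
    and Zm: "\<And>n. Z n \<in> borel_measurable D" and Z0m: "Z0 \<in> borel_measurable D"
    and Zb: "\<And>n. AE \<alpha> in D. 0 \<le> Z n \<alpha> \<and> Z n \<alpha> \<le> B"
    and ptw: "\<And>n. AE \<alpha> in D. VV (L n) (U n) \<alpha> \<le> VV lam mu \<alpha> + t n * Z n \<alpha>"
    and conv: "AE \<alpha> in D. (\<lambda>n. Z n \<alpha>) \<longlonglongrightarrow> Z0 \<alpha>"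
  shows "c0 \<le> (\<integral>\<alpha>. Z0 \<alpha> \<partial>D)"
proof -
  note iV0 = lower_star(1) and low = lower_star(2)
  have iZ: "integrable D (Z n)" for n
  proof (rule integrable_const_bound[where B = B])
    show "AE \<alpha> in D. norm (Z n \<alpha>) \<le> B" using Zb[of n] by eventually_elim auto
  qed (rule Zm)
  have le: "c0 \<le> (\<integral>\<alpha>. Z n \<alpha> \<partial>D)" for n
  proof -
    have Vn0: "AE \<alpha> in D. 0 \<le> VV (L n) (U n) \<alpha>" using gd[of n] by eventually_elim (rule VV_nonneg)
    have iR: "integrable D (\<lambda>\<alpha>. VV lam mu \<alpha> + t n * Z n \<alpha>)" using iV0 iZ[of n] by simp
    have iVn: "integrable D (VV (L n) (U n))"
    proof (rule Bochner_Integration.integrable_bound[OF iR])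
      show "VV (L n) (U n) \<in> borel_measurable D" by measurable
      show "AE \<alpha> in D. norm (VV (L n) (U n) \<alpha>) \<le> norm (VV lam mu \<alpha> + t n * Z n \<alpha>)"
        using Vn0 ptw[of n] by eventually_elim auto
    qed
    have "Gs \<le> (\<integral>\<alpha>. VV (L n) (U n) \<alpha> \<partial>D) + CC (L n) (U n)"
      using LU_nn[of n] gd[of n] iVn by (intro KEY) auto
    moreover have "(\<integral>\<alpha>. VV (L n) (U n) \<alpha> \<partial>D) \<le> (\<integral>\<alpha>. VV lam mu \<alpha> + t n * Z n \<alpha> \<partial>D)"
      using iVn iR ptw[of n] by (intro integral_mono_AE) auto
    moreover have "(\<integral>\<alpha>. VV lam mu \<alpha> + t n * Z n \<alpha> \<partial>D) = (\<integral>\<alpha>. VV lam mu \<alpha> \<partial>D) + t n * (\<integral>\<alpha>. Z n \<alpha> \<partial>D)"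
      using iV0 iZ[of n] by simp
    ultimately have "t n * c0 \<le> t n * (\<integral>\<alpha>. Z n \<alpha> \<partial>D)" using low CCeq[of n] by linarith
    then show ?thesis using t[of n] by simp
  qed
  have "(\<lambda>n. \<integral>\<alpha>. Z n \<alpha> \<partial>D) \<longlonglongrightarrow> (\<integral>\<alpha>. Z0 \<alpha> \<partial>D)"
  proof (rule integral_dominated_convergence[where w = "\<lambda>_. B"])
    show "AE \<alpha> in D. norm (Z n \<alpha>) \<le> B" for n using Zb[of n] by eventually_elim auto
  qed (use Z0m Zm conv in auto)
  then show ?thesis using le by (intro LIMSEQ_le_const) auto
qed

end

lemma pol_le_inv: "0 < hh \<alpha> i \<Longrightarrow> 0 < cc l u \<alpha> i \<Longrightarrow> pol l u i \<alpha> \<le> 1 / cc l u \<alpha> i"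
  by (simp add: pol_def)

lemma tseq:
  fixes c :: real assumes c: "0 < c"
  shows "0 < c / real (n + 2)" "c / real (n + 2) \<le> c / 2" "(\<lambda>n. c / real (n + 2)) \<longlonglongrightarrow> 0"
proof -
  show "0 < c / real (n + 2)" using c by simp
  show "c / real (n + 2) \<le> c / 2" using c by (intro divide_left_mono) auto
  have "(\<lambda>n. c / real n) \<longlonglongrightarrow> 0" by (rule lim_const_over_n)
  from LIMSEQ_ignore_initial_segment[OF this, of 2]
  show "(\<lambda>n. c / real (n + 2)) \<longlonglongrightarrow> 0" by simp
qed

lemma tseq1: "0 < 1 / real (Suc n)" "(\<lambda>n. 1 / real (Suc n)) \<longlonglongrightarrow> 0"
proof -
  show "0 < 1 / real (Suc n)" by simp
  have "(\<lambda>n. 1 / real n) \<longlonglongrightarrow> 0" by (rule lim_const_over_n)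
  from LIMSEQ_Suc[OF this]
  show "(\<lambda>n. 1 / real (Suc n)) \<longlonglongrightarrow> 0" by simp
qed

context setting begin

lemma cc_ge:
  assumes g: "\<forall>k m. 0 \<le> gg \<alpha> k m"
  shows "lam j \<le> cc lam mu \<alpha> j" "mu m * gg \<alpha> j m \<le> cc lam mu \<alpha> j"
proof -
  have s: "0 \<le> (\<Sum>m\<in>UNIV. mu m * gg \<alpha> j m)" using g mu_nn by (intro sum_nonneg) auto
  then show "lam j \<le> cc lam mu \<alpha> j" by (simp add: cc_def)
  have "mu m * gg \<alpha> j m \<le> (\<Sum>m\<in>UNIV. mu m * gg \<alpha> j m)" using g mu_nn by (intro member_le_sum) auto
  then show "mu m * gg \<alpha> j m \<le> cc lam mu \<alpha> j" using lam_nn[of j] by (simp add: cc_def)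
qed

lemma ptw_star:
  assumes "good lam mu \<alpha>"
  shows "LL lam mu (\<lambda>j. pol l u j \<alpha>) \<alpha> \<le> VV lam mu \<alpha>"
  by (rule P1[OF assms]) (rule pol_nonneg)

lemma up_lam: "(\<integral>\<^sup>+\<alpha>. ennreal (pol lam mu k \<alpha>) \<partial>D) \<le> ennreal (PLT k)"
proof -
  define t where "t n = 1 / real (Suc n)" for n
  define L where "L n = lam(k := lam k + t n)" for n
  have t0: "0 < t n" for n by (simp add: t_def)
  show ?thesis
  proof (rule upward_generic[where L = L and U = "\<lambda>_. mu" and t = t and Z = "\<lambda>n. pol (L n) mu k"])
    show "(\<forall>j. 0 \<le> L n j) \<and> (\<forall>m. 0 \<le> mu m)" for n
      using lam_nn mu_nn t0[of n] by (auto simp: L_def)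
    show "AE \<alpha> in D. good (L n) mu \<alpha>" for n
    proof (rule AE_good)
      show "AE \<alpha> in D. \<forall>j. 0 < cc (L n) mu \<alpha> j"
        using cpos_star by eventually_elim (use t0[of n] in \<open>auto simp: L_def cc_shift_l add_pos_nonneg\<close>)
    qed
    show "0 < t n" for n by (rule t0)
    show "CC (L n) mu = CC lam mu + t n * PLT k" for n by (simp add: L_def CC_shift_l)
    show "pol (L n) mu k \<in> borel_measurable D" for n by measurable
    show "AE \<alpha> in D. 0 \<le> pol (L n) mu k \<alpha>" for n by (simp add: pol_nonneg)
    show "AE \<alpha> in D. VV (L n) mu \<alpha> + t n * pol (L n) mu k \<alpha> \<le> VV lam mu \<alpha>" for n
      using good_star
    proof eventually_elim
      case (elim \<alpha>)
      have "VV (L n) mu \<alpha> = LL lam mu (\<lambda>j. pol (L n) mu j \<alpha>) \<alpha> - t n * pol (L n) mu k \<alpha>"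
        by (simp add: VV_def L_def LL_shift_l)
      then show ?case using ptw_star[OF elim, of "L n" mu] by simp
    qed
    show "AE \<alpha> in D. (\<lambda>n. pol (L n) mu k \<alpha>) \<longlonglongrightarrow> pol lam mu k \<alpha>"
      using good_star
    proof eventually_elim
      case (elim \<alpha>)
      show ?case
      proof (rule PC[OF elim])
        fix j show "(\<lambda>n. L n j) \<longlonglongrightarrow> lam j"
        proof (cases "j = k")
          case True
          have "(\<lambda>n. lam k + t n) \<longlonglongrightarrow> lam k + 0" unfolding t_def by (intro tendsto_add tendsto_const tseq1)
          then show ?thesis using True by (simp add: L_def)
        qed (simp add: L_def)
      qed simp
    qed
  qed
qed

lemma up_mu: "(\<integral>\<^sup>+\<alpha>. ennreal (\<Sum>k\<in>UNIV. gg \<alpha> k m * pol lam mu k \<alpha>) \<partial>D) \<le> ennreal (GLT m)"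
proof -
  define t where "t n = 1 / real (Suc n)" for n
  define U where "U n = mu(m := mu m + t n)" for n
  have t0: "0 < t n" for n by (simp add: t_def)
  show ?thesis
  proof (rule upward_generic[where L = "\<lambda>_. lam" and U = U and t = t and Z = "\<lambda>n \<alpha>. \<Sum>k\<in>UNIV. gg \<alpha> k m * pol lam (U n) k \<alpha>"])
    show "(\<forall>j. 0 \<le> lam j) \<and> (\<forall>m. 0 \<le> U n m)" for n
      using lam_nn mu_nn t0[of n] by (auto simp: U_def)
    show "AE \<alpha> in D. good lam (U n) \<alpha>" for n
    proof (rule AE_good)
      show "AE \<alpha> in D. \<forall>j. 0 < cc lam (U n) \<alpha> j"
        using cpos_star nonneg
      proof eventually_elim
        case (elim \<alpha>)
        then show ?case using t0[of n] by (auto simp: U_def cc_shift_u intro!: add_pos_nonneg)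
      qed
    qed
    show "0 < t n" for n by (rule t0)
    show "CC lam (U n) = CC lam mu + t n * GLT m" for n by (simp add: U_def CC_shift_u)
    show "(\<lambda>\<alpha>. \<Sum>k\<in>UNIV. gg \<alpha> k m * pol lam (U n) k \<alpha>) \<in> borel_measurable D" for n by measurable
    show "AE \<alpha> in D. 0 \<le> (\<Sum>k\<in>UNIV. gg \<alpha> k m * pol lam (U n) k \<alpha>)" for n
      using nonneg by eventually_elim (auto intro!: sum_nonneg simp: pol_nonneg)
    show "AE \<alpha> in D. VV lam (U n) \<alpha> + t n * (\<Sum>k\<in>UNIV. gg \<alpha> k m * pol lam (U n) k \<alpha>) \<le> VV lam mu \<alpha>" for n
      using good_star
    proof eventually_elim
      case (elim \<alpha>)
      have "VV lam (U n) \<alpha> = LL lam mu (\<lambda>j. pol lam (U n) j \<alpha>) \<alpha> - t n * (\<Sum>k\<in>UNIV. gg \<alpha> k m * pol lam (U n) k \<alpha>)"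
        by (simp add: VV_def U_def LL_shift_u)
      then show ?case using ptw_star[OF elim, of lam "U n"] by simp
    qed
    show "AE \<alpha> in D. (\<lambda>n. \<Sum>k\<in>UNIV. gg \<alpha> k m * pol lam (U n) k \<alpha>) \<longlonglongrightarrow> (\<Sum>k\<in>UNIV. gg \<alpha> k m * pol lam mu k \<alpha>)"
      using good_star
    proof eventually_elim
      case (elim \<alpha>)
      have "(\<lambda>n. pol lam (U n) k \<alpha>) \<longlonglongrightarrow> pol lam mu k \<alpha>" for k
      proof (rule PC[OF elim])
        fix j show "(\<lambda>n. U n j) \<longlonglongrightarrow> mu j"
        proof (cases "j = m")
          case True
          have "(\<lambda>n. mu m + t n) \<longlonglongrightarrow> mu m + 0" unfolding t_def by (intro tendsto_add tendsto_const tseq1)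
          then show ?thesis using True by (simp add: U_def)
        qed (simp add: U_def)
      qed simp
      then show ?case by (intro tendsto_sum tendsto_mult_left) auto
    qed
  qed
qed

lemma down_lam:
  assumes lk: "0 < lam k"
  shows "PLT k \<le> (\<integral>\<alpha>. pol lam mu k \<alpha> \<partial>D)"
proof -
  define t where "t n = lam k / real (n + 2)" for n
  define L where "L n = lam(k := lam k + - t n)" for n
  have t0: "0 < t n" and t2: "t n \<le> lam k / 2" for n using tseq[OF lk] by (auto simp: t_def)
  show ?thesis
  proof (rule downward_generic[where L = L and U = "\<lambda>_. mu" and t = t and Z = "\<lambda>n. pol (L n) mu k" and B = "2 / lam k"])
    show "(\<forall>j. 0 \<le> L n j) \<and> (\<forall>m. 0 \<le> mu m)" for n
      using lam_nn mu_nn t2[of n] lk by (auto simp: L_def)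
    have cn: "AE \<alpha> in D. \<forall>j. lam k / 2 \<le> cc (L n) mu \<alpha> k \<and> 0 < cc (L n) mu \<alpha> j" for n
      using cpos_star nonneg
    proof eventually_elim
      case (elim \<alpha>)
      have "lam k \<le> cc lam mu \<alpha> k" using cc_ge(1)[of \<alpha> k] elim by auto
      have ccL: "cc (L n) mu \<alpha> j = cc lam mu \<alpha> j - (if j = k then t n else 0)" for j
        by (simp add: L_def cc_def)
      have "lam k / 2 \<le> cc (L n) mu \<alpha> k" using t2[of n] \<open>lam k \<le> cc lam mu \<alpha> k\<close> by (simp add: ccL)
      moreover have "0 < cc (L n) mu \<alpha> j" for j
      proof (cases "j = k")
        case True then show ?thesis using \<open>lam k / 2 \<le> cc (L n) mu \<alpha> k\<close> lk by simp
      next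
        case False then show ?thesis using elim by (simp add: ccL)
      qed
      ultimately show ?case by auto
    qed
    show gdn: "AE \<alpha> in D. good (L n) mu \<alpha>" for n
      by (rule AE_good) (use cn[of n] in \<open>auto elim!: eventually_mono\<close>)
    show "0 < t n" for n by (rule t0)
    show "CC (L n) mu = CC lam mu - t n * PLT k" for n unfolding L_def CC_shift_l by simp
    show "pol (L n) mu k \<in> borel_measurable D" for n by measurable
    show "pol lam mu k \<in> borel_measurable D" by measurable
    show "AE \<alpha> in D. 0 \<le> pol (L n) mu k \<alpha> \<and> pol (L n) mu k \<alpha> \<le> 2 / lam k" for n
      using cn[of n] AE_h_pos
    proof eventually_elim
      case (elim \<alpha>)
      have c: "lam k / 2 \<le> cc (L n) mu \<alpha> k" "0 < cc (L n) mu \<alpha> k" using elim by auto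
      have "pol (L n) mu k \<alpha> \<le> 1 / cc (L n) mu \<alpha> k" using elim by (intro pol_le_inv) auto
      also have "\<dots> \<le> 1 / (lam k / 2)" using c lk by (intro divide_left_mono) auto
      finally show ?case using pol_nonneg[of "L n" mu k \<alpha>] by simp
    qed
    show "AE \<alpha> in D. VV (L n) mu \<alpha> \<le> VV lam mu \<alpha> + t n * pol (L n) mu k \<alpha>" for n
      using good_star
    proof eventually_elim
      case (elim \<alpha>)
      have "VV (L n) mu \<alpha> = LL lam mu (\<lambda>j. pol (L n) mu j \<alpha>) \<alpha> + t n * pol (L n) mu k \<alpha>"
        unfolding VV_def unfolding L_def LL_shift_l by simp
      then show ?case using ptw_star[OF elim, of "L n" mu] by simp
    qed
    show "AE \<alpha> in D. (\<lambda>n. pol (L n) mu k \<alpha>) \<longlonglongrightarrow> pol lam mu k \<alpha>"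
      using good_star
    proof eventually_elim
      case (elim \<alpha>)
      show ?case
      proof (rule PC[OF elim])
        fix j show "(\<lambda>n. L n j) \<longlonglongrightarrow> lam j"
        proof (cases "j = k")
          case True
          have "(\<lambda>n. lam k + - t n) \<longlonglongrightarrow> lam k + - 0" unfolding t_def by (intro tendsto_add tendsto_const tendsto_minus tseq[OF lk])
          then show ?thesis using True by (simp add: L_def)
        qed (simp add: L_def)
      qed simp
    qed
  qed
qed

lemma down_mu:
  assumes um: "0 < mu m"
  shows "GLT m \<le> (\<integral>\<alpha>. (\<Sum>k\<in>UNIV. gg \<alpha> k m * pol lam mu k \<alpha>) \<partial>D)"
proof -
  define t where "t n = mu m / real (n + 2)" for n
  define U where "U n = mu(m := mu m + - t n)" for n
  have t0: "0 < t n" and t2: "t n \<le> mu m / 2" for n using tseq[OF um] by (auto simp: t_def)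
  show ?thesis
  proof (rule downward_generic[where L = "\<lambda>_. lam" and U = U and t = t
        and Z = "\<lambda>n \<alpha>. \<Sum>k\<in>UNIV. gg \<alpha> k m * pol lam (U n) k \<alpha>" and B = "real CARD('k) * (2 / mu m)"])
    show "(\<forall>j. 0 \<le> lam j) \<and> (\<forall>i. 0 \<le> U n i)" for n
      using lam_nn mu_nn t2[of n] um by (auto simp: U_def)
    have cn: "AE \<alpha> in D. \<forall>j. mu m / 2 * gg \<alpha> j m \<le> cc lam (U n) \<alpha> j \<and> 0 < cc lam (U n) \<alpha> j" for n
      using AE_g_pos
    proof eventually_elim
      case (elim \<alpha>)
      have "mu m / 2 * gg \<alpha> j m \<le> cc lam (U n) \<alpha> j" for j
      proof -
        have "mu m * gg \<alpha> j m \<le> cc lam mu \<alpha> j" using cc_ge(2)[of \<alpha> m j] elim by (auto simp: less_imp_le)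
        moreover have "t n * gg \<alpha> j m \<le> mu m / 2 * gg \<alpha> j m" using t2[of n] elim by (intro mult_right_mono) (auto simp: less_imp_le)
        moreover have ccU: "cc lam (U n) \<alpha> j = cc lam mu \<alpha> j - t n * gg \<alpha> j m"
          unfolding U_def cc_shift_u by simp
        moreover have "mu m / 2 * gg \<alpha> j m = mu m * gg \<alpha> j m - mu m / 2 * gg \<alpha> j m" by simp
        ultimately show ?thesis by linarith
      qed
      moreover have "0 < mu m / 2 * gg \<alpha> j m" for j using um elim by simp
      ultimately show ?case by (meson less_le_trans)
    qed
    show gdn: "AE \<alpha> in D. good lam (U n) \<alpha>" for n
      by (rule AE_good) (use cn[of n] in \<open>auto elim!: eventually_mono\<close>)
    show "0 < t n" for n by (rule t0)
    show "CC lam (U n) = CC lam mu - t n * GLT m" for n unfolding U_def CC_shift_u by simp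
    show "(\<lambda>\<alpha>. \<Sum>k\<in>UNIV. gg \<alpha> k m * pol lam (U n) k \<alpha>) \<in> borel_measurable D" for n by measurable
    show "(\<lambda>\<alpha>. \<Sum>k\<in>UNIV. gg \<alpha> k m * pol lam mu k \<alpha>) \<in> borel_measurable D" by measurable
    show "AE \<alpha> in D. 0 \<le> (\<Sum>k\<in>UNIV. gg \<alpha> k m * pol lam (U n) k \<alpha>)
        \<and> (\<Sum>k\<in>UNIV. gg \<alpha> k m * pol lam (U n) k \<alpha>) \<le> real CARD('k) * (2 / mu m)" for n
      using cn[of n] AE_h_pos AE_g_pos
    proof eventually_elim
      case (elim \<alpha>)
      have each: "gg \<alpha> k m * pol lam (U n) k \<alpha> \<le> 2 / mu m" for k
      proof -
        have g: "0 < gg \<alpha> k m" and c: "mu m / 2 * gg \<alpha> k m \<le> cc lam (U n) \<alpha> k" "0 < cc lam (U n) \<alpha> k"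
          using elim by auto
        have "gg \<alpha> k m * pol lam (U n) k \<alpha> \<le> gg \<alpha> k m * (1 / cc lam (U n) \<alpha> k)"
          using elim g by (intro mult_left_mono pol_le_inv) (auto simp: less_imp_le)
        also have "\<dots> \<le> gg \<alpha> k m * (1 / (mu m / 2 * gg \<alpha> k m))"
          using c g um by (intro mult_left_mono divide_left_mono) auto
        also have "\<dots> = 2 / mu m" using g um by (simp add: field_simps)
        finally show ?thesis .
      qed
      have "0 \<le> (\<Sum>k\<in>UNIV. gg \<alpha> k m * pol lam (U n) k \<alpha>)"
        using elim by (intro sum_nonneg) (auto simp: pol_nonneg less_imp_le)
      moreover have "(\<Sum>k\<in>UNIV. gg \<alpha> k m * pol lam (U n) k \<alpha>) \<le> (\<Sum>k\<in>(UNIV::'k set). 2 / mu m)"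
        using each by (intro sum_mono) auto
      ultimately show ?case by simp
    qed
    show "AE \<alpha> in D. VV lam (U n) \<alpha> \<le> VV lam mu \<alpha> + t n * (\<Sum>k\<in>UNIV. gg \<alpha> k m * pol lam (U n) k \<alpha>)" for n
      using good_star
    proof eventually_elim
      case (elim \<alpha>)
      have "VV lam (U n) \<alpha> = LL lam mu (\<lambda>j. pol lam (U n) j \<alpha>) \<alpha> + t n * (\<Sum>k\<in>UNIV. gg \<alpha> k m * pol lam (U n) k \<alpha>)"
        unfolding VV_def unfolding U_def LL_shift_u by simp
      then show ?case using ptw_star[OF elim, of lam "U n"] by simp
    qed
    show "AE \<alpha> in D. (\<lambda>n. \<Sum>k\<in>UNIV. gg \<alpha> k m * pol lam (U n) k \<alpha>) \<longlonglongrightarrow> (\<Sum>k\<in>UNIV. gg \<alpha> k m * pol lam mu k \<alpha>)"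
      using good_star
    proof eventually_elim
      case (elim \<alpha>)
      have "(\<lambda>n. pol lam (U n) k \<alpha>) \<longlonglongrightarrow> pol lam mu k \<alpha>" for k
      proof (rule PC[OF elim])
        fix j show "(\<lambda>n. U n j) \<longlonglongrightarrow> mu j"
        proof (cases "j = m")
          case True
          have "(\<lambda>n. mu m + - t n) \<longlonglongrightarrow> mu m + - 0" unfolding t_def by (intro tendsto_add tendsto_const tendsto_minus tseq[OF um])
          then show ?thesis using True by (simp add: U_def)
        qed (simp add: U_def)
      qed simp
      then show ?case by (intro tendsto_sum tendsto_mult_left) auto
    qed
  qed
qed

end

context setting begin

definition RR :: "('k \<Rightarrow> real) \<Rightarrow> ('k, 'm) chstate \<Rightarrow> ennreal" where
  "RR x \<alpha> = ennreal (VV lam mu \<alpha>) + (\<Sum>k\<in>UNIV. ennreal (lam k) * ennreal (x k))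
     + (\<Sum>m\<in>UNIV. ennreal (mu m) * ennreal (\<Sum>k\<in>UNIV. gg \<alpha> k m * x k))"

lemma ln_split: "ln (1 + (\<Sum>k\<in>UNIV. hh \<alpha> k * x k)) = LL lam mu x \<alpha> + (\<Sum>k\<in>UNIV. lam k * x k)
   + (\<Sum>m\<in>UNIV. mu m * (\<Sum>k\<in>UNIV. gg \<alpha> k m * x k))"
  by (simp add: LL_def)

lemma RR_eq:
  assumes g: "good lam mu \<alpha>" and x: "\<forall>k. 0 \<le> x k"
  shows "ennreal (VV lam mu \<alpha> + (\<Sum>k\<in>UNIV. lam k * x k) + (\<Sum>m\<in>UNIV. mu m * (\<Sum>k\<in>UNIV. gg \<alpha> k m * x k))) = RR x \<alpha>"
proof -
  have gg0: "0 \<le> gg \<alpha> k m" for k m using g by (simp add: good_def)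
  have V0: "0 \<le> VV lam mu \<alpha>" by (rule VV_nonneg[OF g])
  have b0: "0 \<le> lam k * x k" for k using lam_nn x by simp
  have c1: "0 \<le> (\<Sum>k\<in>UNIV. gg \<alpha> k m * x k)" for m using gg0 x by (intro sum_nonneg) simp
  have c0: "0 \<le> mu m * (\<Sum>k\<in>UNIV. gg \<alpha> k m * x k)" for m using mu_nn c1 by simp
  have sb: "0 \<le> (\<Sum>k\<in>UNIV. lam k * x k)" using b0 by (intro sum_nonneg) auto
  have sc: "0 \<le> (\<Sum>m\<in>UNIV. mu m * (\<Sum>k\<in>UNIV. gg \<alpha> k m * x k))" using c0 by (intro sum_nonneg) auto
  have "ennreal (VV lam mu \<alpha> + (\<Sum>k\<in>UNIV. lam k * x k) + (\<Sum>m\<in>UNIV. mu m * (\<Sum>k\<in>UNIV. gg \<alpha> k m * x k)))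
      = ennreal (VV lam mu \<alpha>) + ennreal (\<Sum>k\<in>UNIV. lam k * x k) + ennreal (\<Sum>m\<in>UNIV. mu m * (\<Sum>k\<in>UNIV. gg \<alpha> k m * x k))"
    using V0 sb sc by (simp add: ennreal_plus add_nonneg_nonneg)
  also have "ennreal (\<Sum>k\<in>UNIV. lam k * x k) = (\<Sum>k\<in>UNIV. ennreal (lam k * x k))"
    using b0 by (simp add: sum_ennreal)
  also have "\<dots> = (\<Sum>k\<in>UNIV. ennreal (lam k) * ennreal (x k))"
    using lam_nn x by (intro sum.cong refl) (simp add: ennreal_mult)
  also have "ennreal (\<Sum>m\<in>UNIV. mu m * (\<Sum>k\<in>UNIV. gg \<alpha> k m * x k)) = (\<Sum>m\<in>UNIV. ennreal (mu m * (\<Sum>k\<in>UNIV. gg \<alpha> k m * x k)))"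
    using c0 by (simp add: sum_ennreal)
  also have "\<dots> = (\<Sum>m\<in>UNIV. ennreal (mu m) * ennreal (\<Sum>k\<in>UNIV. gg \<alpha> k m * x k))"
    using mu_nn c1 by (intro sum.cong refl) (simp add: ennreal_mult)
  finally show ?thesis by (simp add: RR_def)
qed

lemma ln_le_RR:
  assumes g: "good lam mu \<alpha>" and x: "\<forall>k. 0 \<le> x k"
  shows "ennreal (ln (1 + (\<Sum>k\<in>UNIV. hh \<alpha> k * x k))) \<le> RR x \<alpha>"
proof -
  have "LL lam mu x \<alpha> \<le> VV lam mu \<alpha>" using P1[OF g] x by auto
  then have "ln (1 + (\<Sum>k\<in>UNIV. hh \<alpha> k * x k)) \<le> VV lam mu \<alpha> + (\<Sum>k\<in>UNIV. lam k * x k) + (\<Sum>m\<in>UNIV. mu m * (\<Sum>k\<in>UNIV. gg \<alpha> k m * x k))"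
    by (simp add: ln_split)
  then have "ennreal (ln (1 + (\<Sum>k\<in>UNIV. hh \<alpha> k * x k))) \<le> ennreal (VV lam mu \<alpha> + (\<Sum>k\<in>UNIV. lam k * x k) + (\<Sum>m\<in>UNIV. mu m * (\<Sum>k\<in>UNIV. gg \<alpha> k m * x k)))"
    by (rule ennreal_leI)
  then show ?thesis using RR_eq[OF g x] by simp
qed

lemma ln_eq_RR:
  assumes g: "good lam mu \<alpha>"
  shows "ennreal (ln (1 + (\<Sum>k\<in>UNIV. hh \<alpha> k * pol lam mu k \<alpha>))) = RR (\<lambda>k. pol lam mu k \<alpha>) \<alpha>"
proof -
  have "ln (1 + (\<Sum>k\<in>UNIV. hh \<alpha> k * pol lam mu k \<alpha>)) = VV lam mu \<alpha> + (\<Sum>k\<in>UNIV. lam k * pol lam mu k \<alpha>) + (\<Sum>m\<in>UNIV. mu m * (\<Sum>k\<in>UNIV. gg \<alpha> k m * pol lam mu k \<alpha>))"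
    by (simp add: ln_split VV_def)
  then show ?thesis using RR_eq[OF g, of "\<lambda>k. pol lam mu k \<alpha>"] by (simp add: pol_nonneg)
qed

lemma int_RR:
  assumes [measurable]: "\<And>k. x k \<in> borel_measurable D"
  shows "(\<integral>\<^sup>+\<alpha>. RR (\<lambda>k. x k \<alpha>) \<alpha> \<partial>D) = (\<integral>\<^sup>+\<alpha>. ennreal (VV lam mu \<alpha>) \<partial>D)
     + (\<Sum>k\<in>UNIV. ennreal (lam k) * (\<integral>\<^sup>+\<alpha>. ennreal (x k \<alpha>) \<partial>D))
     + (\<Sum>m\<in>UNIV. ennreal (mu m) * (\<integral>\<^sup>+\<alpha>. ennreal (\<Sum>k\<in>UNIV. gg \<alpha> k m * x k \<alpha>) \<partial>D))"
proof -
  have [measurable]: "(\<lambda>\<alpha>. x k \<alpha>) \<in> borel_measurable D" for k by simp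
  show ?thesis unfolding RR_def
    by (simp add: nn_integral_add nn_integral_sum nn_integral_cmult)
qed

lemma main:
  "\<exists>p. optimal_policy D PLT GLT p
           \<and> (AE \<alpha> in D.
                (\<forall>i j. 0 < p i \<alpha> \<and> 0 < p j \<alpha> \<longrightarrow> i = j)
              \<and> (\<forall>i. 0 < p i \<alpha> \<longrightarrow>
                    (\<forall>j. j \<noteq> i \<longrightarrow>
                       hh \<alpha> j / (lam j + (\<Sum>m\<in>UNIV. mu m * gg \<alpha> j m))
                         \<le> hh \<alpha> i / (lam i + (\<Sum>m\<in>UNIV. mu m * gg \<alpha> i m)))
                  \<and> p i \<alpha> = max 0 (1 / (lam i + (\<Sum>m\<in>UNIV. mu m * gg \<alpha> i m)) - 1 / hh \<alpha> i)))"
proof (intro exI conjI)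
  let ?p = "pol lam mu"
  have pm: "?p k \<in> borel_measurable D" for k by measurable
  have pol_policy: "policy D ?p" using pm by (simp add: policy_def pol_nonneg)
  have feas: "feasible D PLT GLT ?p"
    unfolding feasible_def using pol_policy up_lam up_mu by auto
  have compl_l: "ennreal (lam k) * (\<integral>\<^sup>+\<alpha>. ennreal (?p k \<alpha>) \<partial>D) = ennreal (lam k) * ennreal (PLT k)" for k
  proof (cases "lam k = 0")
    case False
    then have lk: "0 < lam k" using lam_nn[of k] by simp
    have i: "integrable D (?p k)"
      using pm up_lam[of k] by (intro integrableI_nonneg) (auto simp: pol_nonneg top_unique intro: le_less_trans)
    have "(\<integral>\<^sup>+\<alpha>. ennreal (?p k \<alpha>) \<partial>D) = ennreal (\<integral>\<alpha>. ?p k \<alpha> \<partial>D)"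
      using i by (intro nn_integral_eq_integral) (auto simp: pol_nonneg)
    also have "\<dots> \<ge> ennreal (PLT k)" using down_lam[OF lk] by (rule ennreal_leI)
    finally have "ennreal (PLT k) \<le> (\<integral>\<^sup>+\<alpha>. ennreal (?p k \<alpha>) \<partial>D)" .
    then show ?thesis using up_lam[of k] by (simp add: antisym)
  qed simp
  have compl_u: "ennreal (mu m) * (\<integral>\<^sup>+\<alpha>. ennreal (\<Sum>k\<in>UNIV. gg \<alpha> k m * ?p k \<alpha>) \<partial>D) = ennreal (mu m) * ennreal (GLT m)" for m
  proof (cases "mu m = 0")
    case False
    then have um: "0 < mu m" using mu_nn[of m] by simp
    have nn: "AE \<alpha> in D. 0 \<le> (\<Sum>k\<in>UNIV. gg \<alpha> k m * ?p k \<alpha>)"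
      using nonneg by eventually_elim (auto intro!: sum_nonneg simp: pol_nonneg)
    have i: "integrable D (\<lambda>\<alpha>. \<Sum>k\<in>UNIV. gg \<alpha> k m * ?p k \<alpha>)"
      using up_mu[of m] nn by (intro integrableI_nonneg) (auto simp: top_unique intro: le_less_trans)
    have "(\<integral>\<^sup>+\<alpha>. ennreal (\<Sum>k\<in>UNIV. gg \<alpha> k m * ?p k \<alpha>) \<partial>D) = ennreal (\<integral>\<alpha>. (\<Sum>k\<in>UNIV. gg \<alpha> k m * ?p k \<alpha>) \<partial>D)"
      using i nn by (rule nn_integral_eq_integral)
    also have "\<dots> \<ge> ennreal (GLT m)" using down_mu[OF um] by (rule ennreal_leI)
    finally have "ennreal (GLT m) \<le> (\<integral>\<^sup>+\<alpha>. ennreal (\<Sum>k\<in>UNIV. gg \<alpha> k m * ?p k \<alpha>) \<partial>D)" .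
    then show ?thesis using up_mu[of m] by (simp add: antisym)
  qed simp
  have rate_p: "rate D ?p = (\<integral>\<^sup>+\<alpha>. ennreal (VV lam mu \<alpha>) \<partial>D)
     + (\<Sum>k\<in>UNIV. ennreal (lam k) * ennreal (PLT k)) + (\<Sum>m\<in>UNIV. ennreal (mu m) * ennreal (GLT m))"
  proof -
    have "rate D ?p = (\<integral>\<^sup>+\<alpha>. RR (\<lambda>k. ?p k \<alpha>) \<alpha> \<partial>D)"
      unfolding rate_def using good_star by (intro nn_integral_cong_AE) (auto elim!: eventually_mono simp: ln_eq_RR)
    also have "\<dots> = (\<integral>\<^sup>+\<alpha>. ennreal (VV lam mu \<alpha>) \<partial>D)
     + (\<Sum>k\<in>UNIV. ennreal (lam k) * (\<integral>\<^sup>+\<alpha>. ennreal (?p k \<alpha>) \<partial>D))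
     + (\<Sum>m\<in>UNIV. ennreal (mu m) * (\<integral>\<^sup>+\<alpha>. ennreal (\<Sum>k\<in>UNIV. gg \<alpha> k m * ?p k \<alpha>) \<partial>D))"
      using pm by (rule int_RR)
    finally show ?thesis by (simp only: compl_l compl_u)
  qed
  show "optimal_policy D PLT GLT ?p"
    unfolding optimal_policy_def
  proof (intro conjI allI impI feas)
    fix q assume qf: "feasible D PLT GLT q"
    then have qm: "q k \<in> borel_measurable D" and qn: "0 \<le> q k \<alpha>" for k \<alpha>
      unfolding feasible_def policy_def by blast+
    have "rate D q \<le> (\<integral>\<^sup>+\<alpha>. RR (\<lambda>k. q k \<alpha>) \<alpha> \<partial>D)"
      unfolding rate_def using good_star by (intro nn_integral_mono_AE) (auto elim!: eventually_mono intro!: ln_le_RR simp: qn)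
    also have "\<dots> = (\<integral>\<^sup>+\<alpha>. ennreal (VV lam mu \<alpha>) \<partial>D)
     + (\<Sum>k\<in>UNIV. ennreal (lam k) * (\<integral>\<^sup>+\<alpha>. ennreal (q k \<alpha>) \<partial>D))
     + (\<Sum>m\<in>UNIV. ennreal (mu m) * (\<integral>\<^sup>+\<alpha>. ennreal (\<Sum>k\<in>UNIV. gg \<alpha> k m * q k \<alpha>) \<partial>D))"
      using qm by (rule int_RR)
    also have "\<dots> \<le> (\<integral>\<^sup>+\<alpha>. ennreal (VV lam mu \<alpha>) \<partial>D)
     + (\<Sum>k\<in>UNIV. ennreal (lam k) * ennreal (PLT k)) + (\<Sum>m\<in>UNIV. ennreal (mu m) * ennreal (GLT m))"
      using qf unfolding feasible_def by (intro add_mono order_refl sum_mono mult_left_mono) auto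
    also have "\<dots> = rate D ?p" by (rule rate_p[symmetric])
    finally show "rate D q \<le> rate D ?p" .
  qed
  show "AE \<alpha> in D. (\<forall>i j. 0 < ?p i \<alpha> \<and> 0 < ?p j \<alpha> \<longrightarrow> i = j)
              \<and> (\<forall>i. 0 < ?p i \<alpha> \<longrightarrow>
                    (\<forall>j. j \<noteq> i \<longrightarrow>
                       hh \<alpha> j / (lam j + (\<Sum>m\<in>UNIV. mu m * gg \<alpha> j m))
                         \<le> hh \<alpha> i / (lam i + (\<Sum>m\<in>UNIV. mu m * gg \<alpha> i m)))
                  \<and> ?p i \<alpha> = max 0 (1 / (lam i + (\<Sum>m\<in>UNIV. mu m * gg \<alpha> i m)) - 1 / hh \<alpha> i))"
  proof (rule AE_I2, intro conjI allI impI)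
    fix \<alpha> i j assume "0 < ?p i \<alpha> \<and> 0 < ?p j \<alpha>"
    then have ci: "\<forall>j'. j' \<noteq> i \<longrightarrow> hh \<alpha> j' / cc lam mu \<alpha> j' < hh \<alpha> i / cc lam mu \<alpha> i"
      and cj: "\<forall>j'. j' \<noteq> j \<longrightarrow> hh \<alpha> j' / cc lam mu \<alpha> j' < hh \<alpha> j / cc lam mu \<alpha> j"
      by (auto simp: pol_def split: if_splits)
    show "i = j"
    proof (rule ccontr)
      assume "i \<noteq> j"
      then show False using ci cj by (metis less_asym)
    qed
  next
    fix \<alpha> i j assume p: "0 < ?p i \<alpha>" and "j \<noteq> i"
    then have "hh \<alpha> j / cc lam mu \<alpha> j < hh \<alpha> i / cc lam mu \<alpha> i"
      by (auto simp: pol_def split: if_splits)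
    then show "hh \<alpha> j / (lam j + (\<Sum>m\<in>UNIV. mu m * gg \<alpha> j m)) \<le> hh \<alpha> i / (lam i + (\<Sum>m\<in>UNIV. mu m * gg \<alpha> i m))"
      by (simp add: cc_def)
  next
    fix \<alpha> i assume p: "0 < ?p i \<alpha>"
    then have "\<forall>j'. j' \<noteq> i \<longrightarrow> hh \<alpha> j' / cc lam mu \<alpha> j' < hh \<alpha> i / cc lam mu \<alpha> i"
      by (auto simp: pol_def split: if_splits)
    then have "?p i \<alpha> = max 0 (1 / cc lam mu \<alpha> i - 1 / hh \<alpha> i)" unfolding pol_def by (rule if_P)
    then show "?p i \<alpha> = max 0 (1 / (lam i + (\<Sum>m\<in>UNIV. mu m * gg \<alpha> i m)) - 1 / hh \<alpha> i)"
      by (simp add: cc_def)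
  qed
qed

end

theorem theorem3p1:
  fixes D :: "('k::finite, 'm::finite) chstate measure"
    and PLT :: "'k \<Rightarrow> real" and GLT :: "'m \<Rightarrow> real"
    and lam :: "'k \<Rightarrow> real" and mu :: "'m \<Rightarrow> real"
  assumes prob: "prob_space D"
    and sets_D: "sets D = sets borel"
    and nonneg: "AE \<alpha> in D. (\<forall>k. 0 \<le> hh \<alpha> k) \<and> (\<forall>k m. 0 \<le> gg \<alpha> k m)"
    and cdf_cont: "continuous_on UNIV (joint_cdf D)"
    and cdf_diff: "\<forall>x. joint_cdf D differentiable (at x)"
    and indep: "prob_space.indep_vars D (\<lambda>_. borel) gain_coord UNIV"
    and PLT_pos: "\<forall>k. 0 < PLT k"
    and GLT_pos: "\<forall>m. 0 < GLT m"
    and dual_opt: "dual_optimal D PLT GLT lam mu"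
  shows "\<exists>p. optimal_policy D PLT GLT p
           \<and> (AE \<alpha> in D.
                (\<forall>i j. 0 < p i \<alpha> \<and> 0 < p j \<alpha> \<longrightarrow> i = j)
              \<and> (\<forall>i. 0 < p i \<alpha> \<longrightarrow>
                    (\<forall>j. j \<noteq> i \<longrightarrow>
                       hh \<alpha> j / (lam j + (\<Sum>m\<in>UNIV. mu m * gg \<alpha> j m))
                         \<le> hh \<alpha> i / (lam i + (\<Sum>m\<in>UNIV. mu m * gg \<alpha> i m)))
                  \<and> p i \<alpha> = max 0 (1 / (lam i + (\<Sum>m\<in>UNIV. mu m * gg \<alpha> i m)) - 1 / hh \<alpha> i)))"
proof -
  interpret setting D PLT GLT lam mu
    using prob sets_D nonneg cdf_cont indep PLT_pos GLT_pos dual_opt by (rule setting.intro)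
  show ?thesis by (rule main)
qed

end
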